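(* Fix a real number $\beta>-1$ and let $\phi$ be an analytic self-map of $\mathbb{D}$. If the composition operator $C_\phi:A^2_\beta\to A^2_\beta$, $C_\phi f=f\circ\phi$, is complex symmetric, then $\phi$ is either an elliptic automorphism of $\mathbb{D}$ or has its Denjoy–Wolff point in $\mathbb{D}$ (in particular, $\phi$ fixes a point of $\mathbb{D}$).
   Context: $\mathbb{D}$ is the open unit disc. For $\beta>-1$, $A^2_\beta$ is the Hilbert space of analytic functions $f(z)=\sum_{n\ge0}\widehat f(n)z^n$ on $\mathbb{D}$ with inner product $\langle f,g\rangle=\sum_{n\ge0}\frac{n!\,\Gamma(2+\beta)}{\Gamma(n+2+\beta)}\widehat f(n)\overline{\widehat g(n)}$ (equivalently the $L^2$ inner product with respect to $(\beta+1)(1-|z|^2)^\beta dA(z)$). A conjugation on a Hilbert space $\mathcal H$ is a conjugate-linear map $C$ with $C^2=I$ and $\langle Cf,Cg\rangle=\langle g,f\rangle$ for all $f,g$; a bounded operator $T$ is complex symmetric if $CT=T^*C$ for some conjugation $C$. An elliptic automorphism is an automorphism of $\mathbb{D}$ with a fixed point in $\mathbb{D}$. If $\phi$ is not an elliptic automorphism, there is a unique $\omega\in\overline{\mathbb{D}}$ with $\phi^{[n]}(z)\to\omega$ for all $z\in\mathbb{D}$ ($\phi^{[n]}$ the $n$-th iterate), the Denjoy–Wolff point of $\phi$. *)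

theory Defs
  imports "HOL-Analysis.Analysis"
begin

text \<open>Elements of the weighted Bergman space A^2_beta are represented by their
Taylor coefficient sequences a :: nat => complex (f(z) = sum a n z^n).\<close>

definition bergman_weight :: "real \<Rightarrow> nat \<Rightarrow> real" where
  "bergman_weight \<beta> n = fact n * Gamma (2 + \<beta>) / Gamma (real n + 2 + \<beta>)"

definition A2 :: "real \<Rightarrow> (nat \<Rightarrow> complex) set" where
  "A2 \<beta> = {a. summable (\<lambda>n. bergman_weight \<beta> n * (cmod (a n))\<^sup>2)}"

definition A2_inner :: "real \<Rightarrow> (nat \<Rightarrow> complex) \<Rightarrow> (nat \<Rightarrow> complex) \<Rightarrow> complex" where
  "A2_inner \<beta> a b = (\<Sum>n. complex_of_real (bergman_weight \<beta> n) * a n * cnj (b n))"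

definition A2_norm_sq :: "real \<Rightarrow> (nat \<Rightarrow> complex) \<Rightarrow> real" where
  "A2_norm_sq \<beta> a = (\<Sum>n. bergman_weight \<beta> n * (cmod (a n))\<^sup>2)"

definition power_series_fun :: "(nat \<Rightarrow> complex) \<Rightarrow> complex \<Rightarrow> complex" where
  "power_series_fun a z = (\<Sum>n. a n * z ^ n)"

definition taylor_coeffs :: "(complex \<Rightarrow> complex) \<Rightarrow> nat \<Rightarrow> complex" where
  "taylor_coeffs g n = (deriv ^^ n) g 0 / fact n"

definition comp_op :: "(complex \<Rightarrow> complex) \<Rightarrow> (nat \<Rightarrow> complex) \<Rightarrow> nat \<Rightarrow> complex" where
  "comp_op \<phi> a = taylor_coeffs (\<lambda>z. power_series_fun a (\<phi> z))"

definition A2_bounded_operator :: "real \<Rightarrow> ((nat \<Rightarrow> complex) \<Rightarrow> nat \<Rightarrow> complex) \<Rightarrow> bool" where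
  "A2_bounded_operator \<beta> T \<longleftrightarrow>
     (\<forall>a\<in>A2 \<beta>. T a \<in> A2 \<beta>) \<and>
     (\<forall>a\<in>A2 \<beta>. \<forall>b\<in>A2 \<beta>. \<forall>c::complex. T (\<lambda>n. c * a n + b n) = (\<lambda>n. c * T a n + T b n)) \<and>
     (\<exists>K. \<forall>a\<in>A2 \<beta>. A2_norm_sq \<beta> (T a) \<le> K * A2_norm_sq \<beta> a)"

definition A2_conjugation :: "real \<Rightarrow> ((nat \<Rightarrow> complex) \<Rightarrow> nat \<Rightarrow> complex) \<Rightarrow> bool" where
  "A2_conjugation \<beta> C \<longleftrightarrow>
     (\<forall>a\<in>A2 \<beta>. C a \<in> A2 \<beta>) \<and>
     (\<forall>a\<in>A2 \<beta>. \<forall>b\<in>A2 \<beta>. \<forall>c::complex. C (\<lambda>n. c * a n + b n) = (\<lambda>n. cnj c * C a n + C b n)) \<and>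
     (\<forall>a\<in>A2 \<beta>. C (C a) = a) \<and>
     (\<forall>a\<in>A2 \<beta>. \<forall>b\<in>A2 \<beta>. A2_inner \<beta> (C a) (C b) = A2_inner \<beta> b a)"

definition A2_complex_symmetric :: "real \<Rightarrow> ((nat \<Rightarrow> complex) \<Rightarrow> nat \<Rightarrow> complex) \<Rightarrow> bool" where
  "A2_complex_symmetric \<beta> T \<longleftrightarrow> A2_bounded_operator \<beta> T \<and>
     (\<exists>C Tadj. A2_conjugation \<beta> C \<and>
        (\<forall>a\<in>A2 \<beta>. Tadj a \<in> A2 \<beta>) \<and>
        (\<forall>a\<in>A2 \<beta>. \<forall>b\<in>A2 \<beta>. A2_inner \<beta> (T a) b = A2_inner \<beta> a (Tadj b)) \<and>
        (\<forall>a\<in>A2 \<beta>. C (T a) = Tadj (C a)))"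

definition disc_automorphism :: "(complex \<Rightarrow> complex) \<Rightarrow> bool" where
  "disc_automorphism \<phi> \<longleftrightarrow> \<phi> holomorphic_on ball 0 1 \<and> bij_betw \<phi> (ball 0 1) (ball 0 1)"

definition elliptic_automorphism :: "(complex \<Rightarrow> complex) \<Rightarrow> bool" where
  "elliptic_automorphism \<phi> \<longleftrightarrow> disc_automorphism \<phi> \<and> (\<exists>z\<in>ball 0 1. \<phi> z = z)"

definition denjoy_wolff_point :: "(complex \<Rightarrow> complex) \<Rightarrow> complex \<Rightarrow> bool" where
  "denjoy_wolff_point \<phi> \<omega> \<longleftrightarrow> \<not> elliptic_automorphism \<phi> \<and> \<omega> \<in> cball 0 1 \<and>
     (\<forall>z\<in>ball 0 1. (\<lambda>n. (\<phi> ^^ n) z) \<longlonglongrightarrow> \<omega>)"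

end

theory Submission
  imports Defs "HOL-Complex_Analysis.Complex_Analysis"
begin

abbreviation Mb :: "complex \<Rightarrow> complex \<Rightarrow> complex" where
  "Mb w z \<equiv> Moebius_function 0 w z"

lemma Mb_simple: "Mb w z = (z - w) / (1 - cnj w * z)"
  by (simp add: Moebius_function_def)

lemma Mb_in_ball: "w \<in> ball 0 1 \<Longrightarrow> z \<in> ball 0 1 \<Longrightarrow> Mb w z \<in> ball 0 1"
  using Moebius_function_norm_lt_1 by auto

lemma Mb_inv1: "w \<in> ball 0 1 \<Longrightarrow> z \<in> ball 0 1 \<Longrightarrow> Mb (-w) (Mb w z) = z"
  using Moebius_function_compose[of "-w" w z] by auto

lemma Mb_inv2: "w \<in> ball 0 1 \<Longrightarrow> z \<in> ball 0 1 \<Longrightarrow> Mb w (Mb (-w) z) = z"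
  using Moebius_function_compose[of w "-w" z] by auto

lemma Mb_zero_iff: "w \<in> ball 0 1 \<Longrightarrow> z \<in> ball 0 1 \<Longrightarrow> Mb w z = 0 \<longleftrightarrow> z = w"
proof -
  assume w: "w \<in> ball 0 1" and z: "z \<in> ball 0 1"
  have "1 - cnj w * z \<noteq> 0"
  proof
    assume "1 - cnj w * z = 0"
    then have "norm (cnj w * z) = 1" by (metis eq_iff_diff_eq_0 norm_one)
    moreover have "norm w * norm z < 1 * 1" by (rule mult_strict_mono) (use w z in auto)
    then have "norm (cnj w * z) < 1" by (simp add: norm_mult)
    ultimately show False by simp
  qed
  then show ?thesis by (simp add: Mb_simple)
qed

lemma Mb_hol: "w \<in> ball 0 1 \<Longrightarrow> Mb w holomorphic_on ball 0 1"
  using Moebius_function_holomorphic by auto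

lemma schwarz_pick_aux:
  assumes hol: "f holomorphic_on ball 0 1" and self: "f ` ball 0 1 \<subseteq> ball 0 1"
    and a: "a \<in> ball 0 1"
  shows "(\<lambda>u. Mb (f a) (f (Mb (-a) u))) holomorphic_on ball 0 1"
    and "\<And>u. norm u < 1 \<Longrightarrow> norm (Mb (f a) (f (Mb (-a) u))) < 1"
    and "Mb (f a) (f (Mb (-a) 0)) = 0"
proof -
  have fa: "f a \<in> ball 0 1" using self a by blast
  have ma: "-a \<in> ball 0 1" using a by auto
  have h1: "(f \<circ> Mb (-a)) holomorphic_on ball 0 1"
    by (rule holomorphic_on_compose_gen[OF Mb_hol[OF ma] hol]) (use Mb_in_ball ma in auto)
  have "(Mb (f a) \<circ> (f \<circ> Mb (-a))) holomorphic_on ball 0 1"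
    by (rule holomorphic_on_compose_gen[OF h1 Mb_hol[OF fa]]) (use Mb_in_ball ma self in auto)
  then show "(\<lambda>u. Mb (f a) (f (Mb (-a) u))) holomorphic_on ball 0 1" by (simp add: o_def)
  show "norm (Mb (f a) (f (Mb (-a) u))) < 1" if "norm u < 1" for u
  proof -
    have "Mb (-a) u \<in> ball 0 1" using Mb_in_ball[OF ma] that by auto
    then have "f (Mb (-a) u) \<in> ball 0 1" using self by blast
    then show ?thesis using Mb_in_ball[OF fa] by auto
  qed
  show "Mb (f a) (f (Mb (-a) 0)) = 0"
    by (simp add: Moebius_function_of_zero Moebius_function_eq_zero)
qed

lemma schwarz_pick:
  assumes hol: "f holomorphic_on ball 0 1" and self: "f ` ball 0 1 \<subseteq> ball 0 1"
    and a: "a \<in> ball 0 1" and z: "z \<in> ball 0 1"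
  shows "norm (Mb (f a) (f z)) \<le> norm (Mb a z)"
proof -
  note aux = schwarz_pick_aux[OF hol self a]
  have "norm (Mb (f a) (f (Mb (-a) (Mb a z)))) \<le> norm (Mb a z)"
    by (rule Schwarz_Lemma(1)[OF aux(1) aux(3) aux(2)]) (use Mb_in_ball a z in auto)
  then show ?thesis using Mb_inv1[OF a z] by simp
qed

lemma schwarz_pick_strict:
  fixes f :: "complex \<Rightarrow> complex"
  assumes hol: "f holomorphic_on ball 0 1" and self: "f ` ball 0 1 \<subseteq> ball 0 1"
    and a: "a \<in> ball 0 1" and z: "z \<in> ball 0 1" and za: "z \<noteq> a"
    and naut: "\<not> disc_automorphism f"
  shows "norm (Mb (f a) (f z)) < norm (Mb a z)"
proof (rule ccontr)
  assume "\<not> ?thesis"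
  with schwarz_pick[OF hol self a z] have eq: "norm (Mb (f a) (f z)) = norm (Mb a z)" by simp
  note aux = schwarz_pick_aux[OF hol self a]
  define u where "u = Mb a z"
  have u1: "norm u < 1" using Mb_in_ball a z u_def by auto
  have u0: "u \<noteq> 0" using Mb_zero_iff a z za u_def by auto
  have "norm (Mb (f a) (f (Mb (-a) u))) = norm u" using eq Mb_inv1[OF a z] u_def by simp
  then obtain \<alpha> where al: "\<And>v. norm v < 1 \<Longrightarrow> Mb (f a) (f (Mb (-a) v)) = \<alpha> * v" and n1: "norm \<alpha> = 1"
    using Schwarz_Lemma(3)[OF aux(1) aux(3) aux(2), of 0] u1 u0 by auto
  have fa: "f a \<in> ball 0 1" using self a by blast
  have feq: "f w = Mb (- f a) (\<alpha> * Mb a w)" if w: "w \<in> ball 0 1" for w :: complex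
  proof -
    have "Mb (f a) (f w) = \<alpha> * Mb a w"
      using al[of "Mb a w"] Mb_in_ball[OF a w] Mb_inv1[OF a w] by auto
    moreover have "f w \<in> ball 0 1" using self w by blast
    ultimately show ?thesis using Mb_inv1[OF fa, of "f w"] by auto
  qed
  have ab: "\<alpha> * v \<in> ball 0 1" if "v \<in> ball 0 1" for v
    using that n1 by (simp add: norm_mult)
  have cab: "cnj \<alpha> * v \<in> ball 0 1" if "v \<in> ball 0 1" for v
    using that n1 by (simp add: norm_mult)
  have acn: "\<alpha> * cnj \<alpha> = 1" using n1
    by (metis complex_norm_square mult.commute of_real_1 power_one)
  have "bij_betw f (ball 0 1) (ball 0 1)"
  proof (rule bij_betw_imageI)
    show "inj_on f (ball 0 1)"
    proof (rule inj_onI)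
      fix x y assume x: "x \<in> ball 0 1" and y: "y \<in> ball 0 1" and fxy: "f x = f y"
      have "Mb (f a) (f x) = Mb (f a) (f y)" using fxy by simp
      then have "\<alpha> * Mb a x = \<alpha> * Mb a y"
        using feq x y Mb_inv2[OF fa] ab Mb_in_ball[OF a] by metis
      then have "Mb a x = Mb a y" using n1 by auto
      then show "x = y" using Mb_inv1[OF a x] Mb_inv1[OF a y] by metis
    qed
    show "f ` ball 0 1 = ball 0 1"
    proof
      show "f ` ball 0 1 \<subseteq> ball 0 1" by fact
      show "ball 0 1 \<subseteq> f ` ball 0 1"
      proof
        fix w :: complex assume w: "w \<in> ball 0 1"
        define x where "x = Mb (-a) (cnj \<alpha> * Mb (f a) w)"
        have ma: "-a \<in> ball 0 1" using a by auto
        have x: "x \<in> ball 0 1" unfolding x_def using Mb_in_ball[OF ma] cab Mb_in_ball[OF fa w] by auto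
        have "Mb a x = cnj \<alpha> * Mb (f a) w"
          unfolding x_def using Mb_inv2[OF a] cab Mb_in_ball[OF fa w] by auto
        then have "f x = Mb (- f a) (\<alpha> * (cnj \<alpha> * Mb (f a) w))" using feq[OF x] by simp
        also have "\<dots> = w" using acn Mb_inv1[OF fa w] by (simp add: mult.assoc[symmetric])
        finally show "w \<in> f ` ball 0 1" using x by (metis image_eqI)
      qed
    qed
  qed
  then show False using naut hol unfolding disc_automorphism_def by auto
qed

lemma iter_in_ball:
  fixes f :: "complex \<Rightarrow> complex"
  assumes self: "f ` ball 0 1 \<subseteq> ball 0 1" and z: "z \<in> ball 0 1"
  shows "(f ^^ n) z \<in> ball 0 1"
proof (induction n)
  case 0 then show ?case using z by simp
next
  case (Suc n) then show ?case using self by (auto simp: image_subset_iff)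
qed

lemma denom_nz:
  assumes "norm p < 1" "norm q \<le> 1"
  shows "1 - cnj p * q \<noteq> 0"
proof
  assume "1 - cnj p * q = 0"
  then have "norm (cnj p * q) = 1" by (metis eq_iff_diff_eq_0 norm_one)
  moreover have "norm p * norm q \<le> norm p * 1" using assms by (intro mult_left_mono) auto
  then have "norm p * norm q < 1" using assms by simp
  ultimately show False by (simp add: norm_mult)
qed

lemma Mb_boundary:
  assumes "norm p < 1" "norm q = 1"
  shows "norm (Mb p q) = 1"
proof -
  have qq: "q * cnj q = 1" using assms(2)
    by (metis complex_norm_square mult.commute of_real_1 power_one)
  have "1 - cnj p * q = q * (cnj q - cnj p)" using qq by (simp add: algebra_simps)
  then have "norm (1 - cnj p * q) = norm q * norm (cnj (q - p))"
    by (simp add: norm_mult)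
  then have "norm (1 - cnj p * q) = norm (q - p)"
    using assms(2) by (simp only: complex_mod_cnj mult_1)
  moreover have "1 - cnj p * q \<noteq> 0" using denom_nz assms by auto
  moreover have "q - p \<noteq> 0" using assms by auto
  ultimately show ?thesis by (simp add: Mb_simple norm_divide)
qed

lemma Mb_dist_bound:
  assumes p: "norm p < 1" and z: "norm z < 1"
  shows "norm (z - p) \<le> 2 * norm (Mb p z)"
proof -
  have d: "1 - cnj p * z \<noteq> 0" using denom_nz p z by auto
  have "norm (z - p) = norm (Mb p z) * norm (1 - cnj p * z)"
    using d by (simp add: Mb_simple norm_divide)
  also have "norm (1 - cnj p * z) \<le> 2"
  proof -
    have "norm (1 - cnj p * z) \<le> 1 + norm p * norm z" using norm_triangle_ineq4[of 1 "cnj p * z"]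
      by (simp add: norm_mult)
    also have "norm p * norm z \<le> 1" using p z by (simp add: mult_le_one)
    finally show ?thesis by simp
  qed
  then have "norm (Mb p z) * norm (1 - cnj p * z) \<le> norm (Mb p z) * 2"
    by (simp add: mult_left_mono)
  finally show ?thesis by simp
qed

lemma Mb_half_bound:
  assumes c: "norm c < 1" and z: "norm z < 1" and s: "norm (Mb c z) \<le> 1/2"
  shows "norm (z - c) \<le> 2 * (1 - norm c)"
proof -
  have d: "1 - cnj c * z \<noteq> 0" using denom_nz c z by auto
  have e1: "norm (z - c) = norm (Mb c z) * norm (1 - cnj c * z)"
    using d by (simp add: Mb_simple norm_divide)
  have "1 - cnj c * z = (1 - cnj c * c) + cnj c * (c - z)" by (simp add: algebra_simps)
  moreover have "cnj c * c = of_real ((norm c)^2)"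
    by (metis complex_norm_square mult.commute)
  ultimately have "norm (1 - cnj c * z) \<le> (1 - (norm c)^2) + norm c * norm (z - c)"
  proof -
    assume a1: "1 - cnj c * z = (1 - cnj c * c) + cnj c * (c - z)" and a2: "cnj c * c = of_real ((norm c)^2)"
    have "norm (1 - cnj c * z) \<le> norm (1 - cnj c * c) + norm (cnj c * (c - z))"
      using a1 norm_triangle_ineq by metis
    moreover have "norm (1 - cnj c * c) = 1 - (norm c)^2"
    proof -
      have "1 - cnj c * c = of_real (1 - (norm c)^2)" using a2 by simp
      moreover have "1 - (norm c)^2 \<ge> 0" using c by (simp add: abs_square_le_1 less_imp_le)
      ultimately show ?thesis by (metis norm_of_real abs_of_nonneg)
    qed
    moreover have "norm (cnj c * (c - z)) = norm c * norm (z - c)" by (simp add: norm_mult norm_minus_commute)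
    ultimately show ?thesis by simp
  qed
  then have "norm (z - c) \<le> norm (Mb c z) * ((1 - (norm c)^2) + norm c * norm (z - c))"
    using e1 by (simp add: mult_left_mono)
  also have "\<dots> \<le> (1/2) * ((1 - (norm c)^2) + 1 * norm (z - c))"
  proof (rule mult_mono)
    show "(1 - (norm c)\<^sup>2) + norm c * norm (z - c) \<le> (1 - (norm c)\<^sup>2) + 1 * norm (z - c)"
      using c by (simp add: mult_left_le_one_le less_imp_le)
    show "0 \<le> 1 - (cmod c)\<^sup>2 + cmod c * cmod (z - c)" using c
      by (simp add: abs_square_le_1 less_imp_le)
  qed (use s in auto)
  finally have "norm (z - c) \<le> 1 - (norm c)^2" by simp
  also have "\<dots> \<le> 2 * (1 - norm c)"
  proof -
    have "1 - (norm c)^2 = (1 + norm c) * (1 - norm c)" by (simp add: power2_eq_square algebra_simps)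
    also have "\<dots> \<le> 2 * (1 - norm c)" by (rule mult_right_mono) (use c in auto)
    finally show ?thesis .
  qed
  finally show ?thesis .
qed

lemma iterates_to_fixed:
  fixes \<phi> :: "complex \<Rightarrow> complex"
  assumes hol: "\<phi> holomorphic_on ball 0 1" and self: "\<phi> ` ball 0 1 \<subseteq> ball 0 1"
    and p: "p \<in> ball 0 1" and fx: "\<phi> p = p" and naut: "\<not> disc_automorphism \<phi>"
    and z: "z \<in> ball 0 1"
  shows "(\<lambda>n. (\<phi> ^^ n) z) \<longlonglongrightarrow> p"
proof -
  define x where "x n = (\<phi> ^^ n) z" for n :: nat
  have xb: "x n \<in> ball 0 1" for n using iter_in_ball[OF self z] x_def by auto
  define d where "d n = norm (Mb p (x n))" for n :: nat
  have dec: "d (Suc n) \<le> d n" for n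
    using schwarz_pick[OF hol self p xb[of n]] fx by (simp add: d_def x_def)
  have "decseq d" by (rule decseq_SucI) (use dec in auto)
  moreover have dnn: "\<forall>i. 0 \<le> d i" by (simp add: d_def)
  ultimately obtain L where dL: "d \<longlonglongrightarrow> L" and Lle: "\<forall>i. L \<le> d i"
    using decseq_convergent[of d 0] by blast
  have d0: "d 0 < 1" using Mb_in_ball[OF p xb[of 0]] d_def by auto
  have "L = 0"
  proof (rule ccontr)
    assume Lnz: "L \<noteq> 0"
    have "seq_compact (cball (0::complex) 1)" by (rule compact_imp_seq_compact) simp
    moreover have "\<forall>n. x n \<in> cball 0 1" using xb by (simp add: less_imp_le)
    ultimately obtain q r where q: "q \<in> cball 0 1" and r: "strict_mono (r::nat\<Rightarrow>nat)"
      and xr: "(x \<circ> r) \<longlonglongrightarrow> q"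
      using seq_compactE by metis
    have pn: "norm p < 1" using p by simp
    have den: "1 - cnj p * q \<noteq> 0" using denom_nz pn q by auto
    have xr': "(\<lambda>j. x (r j)) \<longlonglongrightarrow> q" using xr by (simp add: o_def)
    have "(\<lambda>j. (x (r j) - p) / (1 - cnj p * x (r j))) \<longlonglongrightarrow> (q - p) / (1 - cnj p * q)"
      by (intro tendsto_divide tendsto_diff tendsto_mult tendsto_const xr' den)
    then have cMb: "(\<lambda>j. Mb p (x (r j))) \<longlonglongrightarrow> Mb p q" by (simp add: Mb_simple)
    then have "(\<lambda>j. d (r j)) \<longlonglongrightarrow> norm (Mb p q)"
      unfolding d_def by (rule tendsto_norm)
    moreover have "(\<lambda>j. d (r j)) \<longlonglongrightarrow> L" using LIMSEQ_subseq_LIMSEQ[OF dL r] by (simp add: o_def)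
    ultimately have Lq: "L = norm (Mb p q)" using LIMSEQ_unique by blast
    have qin: "norm q < 1"
    proof (rule ccontr)
      assume "\<not> norm q < 1"
      then have "norm q = 1" using q by simp
      then have "L = 1" using Lq Mb_boundary pn by simp
      moreover have "L \<le> d 0" using Lle by blast
      ultimately show False using d0 by simp
    qed
    have "continuous_on (ball 0 1) \<phi>" using hol holomorphic_on_imp_continuous_on by blast
    then have "isCont \<phi> q"
      using qin continuous_on_eq_continuous_at open_ball mem_ball_0 by blast
    then have "(\<lambda>j. \<phi> (x (r j))) \<longlonglongrightarrow> \<phi> q"
      using isCont_tendsto_compose xr' by blast
    moreover have "\<phi> (x (r j)) = x (Suc (r j))" for j by (simp add: x_def)
    ultimately have xs: "(\<lambda>j. x (Suc (r j))) \<longlonglongrightarrow> \<phi> q" by simp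
    have "\<phi> q \<in> ball 0 1" using self qin by (auto simp: image_subset_iff)
    then have den2: "1 - cnj p * \<phi> q \<noteq> 0" using denom_nz pn by (simp add: less_imp_le)
    have "(\<lambda>j. (x (Suc (r j)) - p) / (1 - cnj p * x (Suc (r j)))) \<longlonglongrightarrow> (\<phi> q - p) / (1 - cnj p * \<phi> q)"
      by (intro tendsto_divide tendsto_diff tendsto_mult tendsto_const xs den2)
    then have "(\<lambda>j. Mb p (x (Suc (r j)))) \<longlonglongrightarrow> Mb p (\<phi> q)" by (simp add: Mb_simple)
    then have "(\<lambda>j. d (Suc (r j))) \<longlonglongrightarrow> norm (Mb p (\<phi> q))"
      unfolding d_def by (rule tendsto_norm)
    moreover have "strict_mono (\<lambda>j. Suc (r j))" using r by (simp add: strict_mono_def)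
    then have "(\<lambda>j. d (Suc (r j))) \<longlonglongrightarrow> L" using LIMSEQ_subseq_LIMSEQ[OF dL] by (simp add: o_def)
    ultimately have "L = norm (Mb p (\<phi> q))" using LIMSEQ_unique by blast
    moreover have qp: "q \<noteq> p" using Lnz Lq by (auto simp: Moebius_function_eq_zero)
    have "norm (Mb (\<phi> p) (\<phi> q)) < norm (Mb p q)"
      by (rule schwarz_pick_strict[OF hol self p _ qp naut]) (use qin in auto)
    ultimately show False using Lq fx by simp
  qed
  then have "d \<longlonglongrightarrow> 0" using dL by simp
  then have "(\<lambda>n. 2 * d n) \<longlonglongrightarrow> 0" using tendsto_mult[OF tendsto_const[of 2]] by fastforce
  moreover have "norm (x n - p) \<le> 2 * d n" for n
    using Mb_dist_bound[of p "x n"] p xb[of n] by (simp add: d_def)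
  ultimately have "(\<lambda>n. x n - p) \<longlonglongrightarrow> 0"
    using Lim_null_comparison[of "\<lambda>n. x n - p" "\<lambda>n. 2 * d n" sequentially] by (simp add: always_eventually)
  then have "x \<longlonglongrightarrow> p" by (rule LIM_zero_cancel)
  then show ?thesis unfolding x_def by simp
qed

lemma Mb_identity:
  fixes c z :: complex
  shows "(norm (1 - cnj c * z))^2 - (norm (z - c))^2 = (1 - (norm c)^2) * (1 - (norm z)^2)"
proof -
  have e: "\<And>a::complex. complex_of_real ((norm a)^2) = a * cnj a" by (rule complex_norm_square)
  have "complex_of_real ((norm (1 - cnj c * z))^2 - (norm (z - c))^2)
      = (1 - cnj c * z) * cnj (1 - cnj c * z) - (z - c) * cnj (z - c)"
    by (simp only: of_real_diff e)
  also have "\<dots> = (1 - c * cnj c) * (1 - z * cnj z)" by (simp add: algebra_simps)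
  also have "\<dots> = complex_of_real ((1 - (norm c)^2) * (1 - (norm z)^2))"
    by (simp only: of_real_mult of_real_diff of_real_1 e)
  finally show ?thesis using of_real_eq_iff by blast
qed

lemma norm2_conv:
  fixes a b :: complex
  assumes "0 \<le> t" "t \<le> 1"
  shows "(norm (t *\<^sub>R a + (1 - t) *\<^sub>R b))^2 \<le> t * (norm a)^2 + (1 - t) * (norm b)^2"
proof -
  have "t * (norm a)^2 + (1 - t) * (norm b)^2 - (norm (t *\<^sub>R a + (1 - t) *\<^sub>R b))^2
      = t * (1 - t) * (norm (a - b))^2"
    by (simp add: power2_norm_eq_inner inner_add_left inner_add_right inner_diff_left
        inner_diff_right inner_commute algebra_simps)
  moreover have "t * (1 - t) * (norm (a - b))^2 \<ge> 0" using assms by simp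
  ultimately show ?thesis by linarith
qed

definition Bset :: "real \<Rightarrow> complex \<Rightarrow> complex set" where
  "Bset R c = {z. norm z \<le> 1 \<and> (norm (z - c))^2 \<le> R * (norm (1 - cnj c * z))^2}"

lemma Bset_convex:
  assumes R: "0 \<le> R" "R \<le> 1" and c: "norm c < 1"
  shows "convex (Bset R c)"
proof (rule convexI)
  fix x y :: complex and u v :: real
  assume x: "x \<in> Bset R c" and y: "y \<in> Bset R c" and u: "0 \<le> u" and v: "0 \<le> v" and uv: "u + v = 1"
  define A where "A = R * (1 - (norm c)^2)"
  have A0: "A \<ge> 0" unfolding A_def using R c by (simp add: abs_square_le_1 less_imp_le)
  define G where "G z = (1 - R) * (norm (z - c))^2 + A * (norm z)^2" for z
  have key: "(norm (z - c))^2 \<le> R * (norm (1 - cnj c * z))^2 \<longleftrightarrow> G z \<le> A" for z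
  proof -
    have id: "(norm (1 - cnj c * z))^2 = (norm (z - c))^2 + (1 - (norm c)^2) * (1 - (norm z)^2)"
      using Mb_identity[of c z] by linarith
    have "R * (norm (1 - cnj c * z))^2 = R * (norm (z - c))^2 + R * ((1 - (norm c)^2) * (1 - (norm z)^2))"
      by (simp only: id distrib_left)
    moreover have "G z - A = (norm (z - c))^2 - R * (norm (z - c))^2 - R * ((1 - (norm c)^2) * (1 - (norm z)^2))"
      unfolding G_def A_def by (simp add: algebra_simps)
    ultimately show ?thesis by linarith
  qed
  have v1: "v = 1 - u" using uv by simp
  have Gc: "G (u *\<^sub>R x + v *\<^sub>R y) \<le> u * G x + v * G y"
  proof -
    have "u *\<^sub>R x + v *\<^sub>R y - c = u *\<^sub>R (x - c) + (1 - u) *\<^sub>R (y - c)"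
    proof -
      have "u *\<^sub>R x + v *\<^sub>R y - c = u *\<^sub>R x + v *\<^sub>R y - (u + v) *\<^sub>R c" using uv by simp
      also have "\<dots> = u *\<^sub>R (x - c) + v *\<^sub>R (y - c)" by (simp add: algebra_simps)
      finally show ?thesis using v1 by simp
    qed
    then have h1: "(norm (u *\<^sub>R x + v *\<^sub>R y - c))^2 \<le> u * (norm (x - c))^2 + (1 - u) * (norm (y - c))^2"
      using norm2_conv[of u "x - c" "y - c"] u uv v by simp
    have h2: "(norm (u *\<^sub>R x + v *\<^sub>R y))^2 \<le> u * (norm x)^2 + (1 - u) * (norm y)^2"
      using norm2_conv[of u x y] u uv v v1 by simp
    have "G (u *\<^sub>R x + v *\<^sub>R y) \<le> (1 - R) * (u * (norm (x - c))^2 + (1 - u) * (norm (y - c))^2)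
            + A * (u * (norm x)^2 + (1 - u) * (norm y)^2)"
      unfolding G_def using h1 h2 R A0 by (intro add_mono mult_left_mono) auto
    also have "\<dots> = u * G x + v * G y" unfolding G_def v1 by (simp add: algebra_simps)
    finally show ?thesis .
  qed
  have "G x \<le> A" "G y \<le> A" using x y key unfolding Bset_def by auto
  then have "u * G x + v * G y \<le> u * A + v * A" using u v by (intro add_mono mult_left_mono) auto
  also have "\<dots> = (u + v) * A" by (simp add: distrib_right)
  also have "\<dots> = A" using uv by simp
  finally have "G (u *\<^sub>R x + v *\<^sub>R y) \<le> A" using Gc by linarith
  moreover have "norm (u *\<^sub>R x + v *\<^sub>R y) \<le> 1"
  proof -
    have "norm (u *\<^sub>R x + v *\<^sub>R y) \<le> u * norm x + v * norm y"
      using norm_triangle_ineq[of "u *\<^sub>R x" "v *\<^sub>R y"] u v by simp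
    also have "\<dots> \<le> u * 1 + v * 1" using x y u v unfolding Bset_def by (intro add_mono mult_left_mono) auto
    finally show ?thesis using uv by simp
  qed
  ultimately show "u *\<^sub>R x + v *\<^sub>R y \<in> Bset R c" using key unfolding Bset_def by auto
qed

lemma delta_bound:
  fixes z w :: complex
  assumes r: "0 \<le> r" "r < 1" and w: "norm w \<le> r" and z: "norm z \<le> r"
  shows "(norm (z - w))^2 \<le> (1 - (1 - r^2)^2 / 4) * (norm (1 - cnj w * z))^2"
proof -
  have r2: "0 \<le> 1 - r^2" "1 - r^2 \<le> 1" using r by (auto simp: abs_square_le_1)
  have a1: "1 - r^2 \<le> 1 - (norm w)^2" using w r by (simp add: power_mono)
  have a2: "1 - r^2 \<le> 1 - (norm z)^2" using z r by (simp add: power_mono)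
  have "(1 - r^2) * (1 - r^2) \<le> (1 - (norm w)^2) * (1 - (norm z)^2)"
    by (rule mult_mono[OF a1 a2]) (use r2 a1 in linarith)+
  then have p: "(1 - r^2)^2 \<le> (1 - (norm w)^2) * (1 - (norm z)^2)" by (simp add: power2_eq_square)
  have n2: "(norm (1 - cnj w * z))^2 \<le> 4"
  proof -
    have "norm (1 - cnj w * z) \<le> 1 + norm w * norm z"
      using norm_triangle_ineq4[of 1 "cnj w * z"] by (simp add: norm_mult)
    also have "norm w * norm z \<le> 1 * 1" by (rule mult_mono) (use w z r in auto)
    finally have "norm (1 - cnj w * z) \<le> 2" by simp
    then show ?thesis using power_mono[of "norm (1 - cnj w * z)" 2 2] by simp
  qed
  have "(norm (z - w))^2 = (norm (1 - cnj w * z))^2 - (1 - (norm w)^2) * (1 - (norm z)^2)"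
    using Mb_identity[of w z] by simp
  also have "\<dots> \<le> (norm (1 - cnj w * z))^2 - (1 - r^2)^2" using p by simp
  also have "\<dots> \<le> (norm (1 - cnj w * z))^2 - (1 - r^2)^2 / 4 * (norm (1 - cnj w * z))^2"
  proof -
    have "(1 - r^2)^2 / 4 * (norm (1 - cnj w * z))^2 \<le> (1 - r^2)^2 / 4 * 4"
      using n2 by (intro mult_left_mono) auto
    then show ?thesis by simp
  qed
  also have "\<dots> = (1 - (1 - r^2)^2 / 4) * (norm (1 - cnj w * z))^2" by (simp add: algebra_simps)
  finally show ?thesis .
qed

lemma Bset_inner:
  assumes R: "0 \<le> R" "R < 1" and r: "0 \<le> r" "r < 1" and c: "norm c \<le> r" and z: "z \<in> Bset R c"
  shows "(norm z)^2 \<le> 1 - (1 - R) * (1 - r)^2"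
proof -
  have z1: "norm z \<le> 1" and zc: "(norm (z - c))^2 \<le> R * (norm (1 - cnj c * z))^2"
    using z unfolding Bset_def by auto
  have "1 - r \<le> norm (1 - cnj c * z)"
  proof -
    have "norm c * norm z \<le> r * 1" by (rule mult_mono) (use c z1 r in auto)
    then have "norm (cnj c * z) \<le> r" by (simp add: norm_mult)
    then show ?thesis using norm_triangle_ineq2[of 1 "cnj c * z"] by simp
  qed
  then have q: "(1 - r)^2 \<le> (norm (1 - cnj c * z))^2" using r by (simp add: power_mono)
  have "(1 - R) * (1 - r)^2 \<le> (1 - R) * (norm (1 - cnj c * z))^2" using q R by (simp add: mult_left_mono)
  also have "\<dots> \<le> (norm (1 - cnj c * z))^2 - (norm (z - c))^2" using zc by (simp add: algebra_simps)
  also have "\<dots> = (1 - (norm c)^2) * (1 - (norm z)^2)" by (rule Mb_identity)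
  also have "\<dots> \<le> 1 - (norm z)^2"
  proof -
    have "0 \<le> 1 - (norm z)^2" using z1 by (simp add: abs_square_le_1)
    moreover have "1 - (norm c)^2 \<le> 1" by simp
    moreover have "0 \<le> 1 - (norm c)^2" using c r by (simp add: abs_square_le_1)
    ultimately show ?thesis using mult_left_le_one_le[of "1 - (norm z)^2" "1 - (norm c)^2"] by simp
  qed
  finally show ?thesis by simp
qed

lemma Bset_Mb:
  assumes c: "norm c < 1" and z: "norm z < 1"
  shows "z \<in> Bset R c \<longleftrightarrow> (norm (Mb c z))^2 \<le> R"
proof -
  have d: "1 - cnj c * z \<noteq> 0"
  proof
    assume "1 - cnj c * z = 0"
    then have "norm (cnj c * z) = 1" by (metis eq_iff_diff_eq_0 norm_one)
    moreover have "norm c * norm z \<le> norm c * 1" using z by (intro mult_left_mono) auto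
    ultimately show False using c by (simp add: norm_mult)
  qed
  then have pos: "0 < (norm (1 - cnj c * z))^2" by simp
  have "(norm (Mb c z))^2 = (norm (z - c))^2 / (norm (1 - cnj c * z))^2"
    by (simp add: Mb_simple norm_divide power_divide)
  then show ?thesis unfolding Bset_def using z pos by (simp add: pos_divide_le_eq)
qed

lemma bounded_orbit_fixed_point:
  fixes \<phi> :: "complex \<Rightarrow> complex"
  assumes hol: "\<phi> holomorphic_on ball 0 1" and self: "\<phi> ` ball 0 1 \<subseteq> ball 0 1"
    and r: "0 \<le> r" "r < 1" and orb: "\<And>n. norm ((\<phi> ^^ n) 0) \<le> r"
  shows "\<exists>p\<in>ball 0 1. \<phi> p = p"
proof -
  define c where "c n = (\<phi> ^^ n) 0" for n :: nat
  define R where "R = 1 - (1 - r^2)^2 / 4"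
  have r2: "0 \<le> 1 - r^2" "1 - r^2 \<le> 1" using r by (auto simp: abs_square_le_1)
  have "(1 - r^2)^2 \<le> 1" using r2 by (simp add: power_le_one)
  then have R0: "0 \<le> R" unfolding R_def by simp
  have "0 < 1 - r^2" using r by (simp add: abs_square_less_1)
  then have R1: "R < 1" unfolding R_def by simp
  define \<epsilon> where "\<epsilon> = (1 - R) * (1 - r)^2"
  have \<epsilon>0: "\<epsilon> > 0" unfolding \<epsilon>_def using R1 r by simp
  have cr: "norm (c n) \<le> r" for n using orb c_def by simp
  have cb: "norm (c n) < 1" for n using cr[of n] r by simp
  define Kn where "Kn N = {z. \<forall>n\<ge>N. z \<in> Bset R (c n)}" for N
  define K where "K = (\<Union>N. Kn N)"
  define E where "E = {z::complex. (norm z)^2 \<le> 1 - \<epsilon>}"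
  have KE: "K \<subseteq> E"
  proof
    fix z assume "z \<in> K"
    then obtain N where "z \<in> Kn N" unfolding K_def by auto
    then have "z \<in> Bset R (c N)" unfolding Kn_def by auto
    then show "z \<in> E" unfolding E_def \<epsilon>_def using Bset_inner[OF R0 R1 r cr[of N]] by auto
  qed
  have Eball: "E \<subseteq> ball 0 1"
  proof
    fix z :: complex assume "z \<in> E"
    then have "(norm z)^2 < 1" unfolding E_def using \<epsilon>0 by simp
    then have "norm z < 1" by (simp add: abs_square_less_1)
    then show "z \<in> ball 0 1" by simp
  qed
  have Ecl: "closed E" unfolding E_def
    by (intro closed_Collect_le continuous_intros)
  define S where "S = closure K"
  have SE: "S \<subseteq> E" unfolding S_def using KE Ecl by (rule closure_minimal)
  have Sb: "S \<subseteq> ball 0 1" using SE Eball by auto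
  have Kmono: "Kn N \<subseteq> Kn M" if "N \<le> M" for N M using that unfolding Kn_def by auto
  have Knconv: "convex (Kn N)" for N
  proof -
    have "Kn N = (\<Inter>n\<in>{N..}. Bset R (c n))" unfolding Kn_def by auto
    moreover have "convex (Bset R (c n))" for n using Bset_convex[OF R0 _ cb[of n]] R1 by simp
    ultimately show ?thesis by (auto intro!: convex_INT)
  qed
  have Kconv: "convex K"
  proof (rule convexI)
    fix x y u v assume x: "x \<in> K" and y: "y \<in> K" and u: "0 \<le> (u::real)" and v: "0 \<le> v" and uv: "u + v = 1"
    obtain N1 where "x \<in> Kn N1" using x unfolding K_def by auto
    obtain N2 where "y \<in> Kn N2" using y unfolding K_def by auto
    then have "x \<in> Kn (max N1 N2)" "y \<in> Kn (max N1 N2)"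
      using Kmono \<open>x \<in> Kn N1\<close> by (meson max.cobounded1 max.cobounded2 subsetD)+
    then have "u *\<^sub>R x + v *\<^sub>R y \<in> Kn (max N1 N2)"
      using Knconv[of "max N1 N2"] u v uv unfolding convex_def by blast
    then show "u *\<^sub>R x + v *\<^sub>R y \<in> K" unfolding K_def by auto
  qed
  have zeroK: "0 \<in> K"
  proof -
    have "0 \<in> Bset R (c n)" for n
    proof -
      have "(norm (0 - c n))^2 \<le> R * (norm (1 - cnj (c n) * 0))^2"
        using delta_bound[OF r cr[of n], of 0] r unfolding R_def by simp
      then show ?thesis unfolding Bset_def by simp
    qed
    then have "0 \<in> Kn 0" unfolding Kn_def by auto
    then show ?thesis unfolding K_def by auto
  qed
  have cS: "c (Suc n) = \<phi> (c n)" for n unfolding c_def by simp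
  have phiK: "\<phi> ` K \<subseteq> K"
  proof
    fix w assume "w \<in> \<phi> ` K"
    then obtain z where z: "z \<in> K" and wz: "w = \<phi> z" by auto
    obtain N where zN: "z \<in> Kn N" using z unfolding K_def by auto
    have zb: "z \<in> ball 0 1" using z KE Eball by auto
    have wb: "\<phi> z \<in> ball 0 1" using zb self by blast
    have "\<phi> z \<in> Bset R (c m)" if m: "m \<ge> Suc N" for m
    proof -
      obtain n where mn: "m = Suc n" and nN: "n \<ge> N" using m by (metis Suc_le_D Suc_le_mono)
      have "z \<in> Bset R (c n)" using zN nN unfolding Kn_def by auto
      then have "(norm (Mb (c n) z))^2 \<le> R" using Bset_Mb[OF cb[of n]] zb by simp
      moreover have "norm (Mb (\<phi> (c n)) (\<phi> z)) \<le> norm (Mb (c n) z)"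
        using schwarz_pick[OF hol self _ zb] cb[of n] by simp
      ultimately have "(norm (Mb (c m) (\<phi> z)))^2 \<le> R"
        using mn cS by (smt (verit) norm_ge_zero power_mono)
      then show ?thesis using Bset_Mb[OF cb[of m]] wb by simp
    qed
    then have "\<phi> z \<in> Kn (Suc N)" unfolding Kn_def by auto
    then show "w \<in> K" unfolding K_def wz by auto
  qed
  have contS: "continuous_on S \<phi>"
    using hol holomorphic_on_imp_continuous_on continuous_on_subset Sb by blast
  have "\<phi> ` S \<subseteq> S"
    unfolding S_def by (rule image_closure_subset) (use contS phiK closure_subset S_def in auto)
  moreover have "compact S"
  proof -
    have "K \<subseteq> ball 0 1" using KE Eball by auto
    then have "bounded K" using bounded_subset[OF bounded_ball] by blast
    then show ?thesis unfolding S_def by simp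
  qed
  moreover have "convex S" unfolding S_def using Kconv by simp
  moreover have "S \<noteq> {}" unfolding S_def using zeroK closure_subset by auto
  moreover have "\<phi> \<in> S \<rightarrow> S" using calculation(1) by auto
  ultimately obtain p where "p \<in> S" "\<phi> p = p"
    using brouwer[of S \<phi>] contS by blast
  then show ?thesis using Sb by auto
qed

definition ek :: "nat \<Rightarrow> nat \<Rightarrow> complex" where
  "ek k = (\<lambda>n. if n = k then 1 else 0)"

lemma Gamma_shift_pos:
  assumes "\<beta> > -1"
  shows "Gamma (real n + 2 + \<beta>) > 0"
  using assms by (intro Gamma_real_pos) simp

lemma weight_pos:
  assumes "\<beta> > -1" shows "bergman_weight \<beta> n > 0"
proof -
  have "Gamma (2 + \<beta>) > 0" using assms by (intro Gamma_real_pos) simp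
  then show ?thesis unfolding bergman_weight_def using Gamma_shift_pos[OF assms, of n] by simp
qed

lemma weight_0:
  assumes "\<beta> > -1" shows "bergman_weight \<beta> 0 = 1"
proof -
  have "Gamma (2 + \<beta>) > 0" using assms by (intro Gamma_real_pos) simp
  then show ?thesis unfolding bergman_weight_def by (simp add: add.commute)
qed

lemma weight_Suc:
  assumes "\<beta> > -1"
  shows "bergman_weight \<beta> (Suc n) = bergman_weight \<beta> n * ((real n + 1) / (real n + 2 + \<beta>))"
proof -
  have pos: "real n + 2 + \<beta> > 0" using assms by simp
  have ni: "real n + 2 + \<beta> \<notin> \<int>\<^sub>\<le>\<^sub>0" using pos by (auto dest: nonpos_Ints_nonpos)
  have "Gamma (real (Suc n) + 2 + \<beta>) = Gamma ((real n + 2 + \<beta>) + 1)" by (simp add: algebra_simps)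
  also have "\<dots> = (real n + 2 + \<beta>) * Gamma (real n + 2 + \<beta>)" using Gamma_plus1[OF ni] .
  finally have g: "Gamma (real (Suc n) + 2 + \<beta>) = (real n + 2 + \<beta>) * Gamma (real n + 2 + \<beta>)" .
  have "Gamma (real n + 2 + \<beta>) > 0" using Gamma_shift_pos[OF assms] .
  then show ?thesis unfolding bergman_weight_def g using pos
    by (simp add: field_simps)
qed

lemma weight_le1:
  assumes "\<beta> > -1" shows "bergman_weight \<beta> n \<le> 1"
proof (induction n)
  case 0 then show ?case using weight_0[OF assms] by simp
next
  case (Suc n)
  have "(real n + 1) / (real n + 2 + \<beta>) \<le> 1" using assms by simp
  moreover have "bergman_weight \<beta> n \<ge> 0" using weight_pos[OF assms] less_imp_le by blast
  ultimately have "bergman_weight \<beta> n * ((real n + 1) / (real n + 2 + \<beta>)) \<le> bergman_weight \<beta> n"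
    using mult_left_le[of "(real n + 1) / (real n + 2 + \<beta>)" "bergman_weight \<beta> n"] by linarith
  then show ?case using weight_Suc[OF assms] Suc by simp
qed

lemma ek_A2: "ek k \<in> A2 \<beta>"
proof -
  have "(\<lambda>n. bergman_weight \<beta> n * (cmod (ek k n))\<^sup>2) = (\<lambda>n. if n = k then bergman_weight \<beta> k else 0)"
    by (auto simp: ek_def)
  then show ?thesis unfolding A2_def using sums_single[of k "\<lambda>_. bergman_weight \<beta> k"]
    by (auto simp: sums_iff)
qed

lemma inner_ek: "A2_inner \<beta> (ek k) g = complex_of_real (bergman_weight \<beta> k) * cnj (g k)"
proof -
  have "(\<lambda>n. complex_of_real (bergman_weight \<beta> n) * ek k n * cnj (g n))
      = (\<lambda>n. if n = k then complex_of_real (bergman_weight \<beta> k) * cnj (g k) else 0)"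
    by (auto simp: ek_def)
  then show ?thesis unfolding A2_inner_def
    using sums_single[of k "\<lambda>_. complex_of_real (bergman_weight \<beta> k) * cnj (g k)"]
    by (simp add: sums_iff)
qed

lemma taylor_const: "taylor_coeffs (\<lambda>z. c) = (\<lambda>n. if n = 0 then c else 0)"
  unfolding taylor_coeffs_def by (auto simp: higher_deriv_const)

lemma psf_ek: "power_series_fun (ek k) w = w ^ k"
proof -
  have "(\<lambda>n. ek k n * w ^ n) = (\<lambda>n. if n = k then w ^ k else 0)" by (auto simp: ek_def)
  then show ?thesis unfolding power_series_fun_def using sums_single[of k "\<lambda>_. w ^ k"]
    by (simp add: sums_iff)
qed

lemma psf_taylor:
  assumes "H holomorphic_on ball 0 1" "w \<in> ball 0 1"
  shows "power_series_fun (taylor_coeffs H) w = H w"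
proof -
  have "(\<lambda>n. (deriv ^^ n) H 0 / fact n * (w - 0) ^ n) sums H w"
    by (rule holomorphic_power_series[OF assms])
  then show ?thesis unfolding power_series_fun_def taylor_coeffs_def by (simp add: sums_iff)
qed

lemma taylor_cong:
  assumes "\<And>w. w \<in> ball 0 1 \<Longrightarrow> F w = G w"
  shows "taylor_coeffs F = taylor_coeffs G"
proof -
  have "eventually (\<lambda>x. F x = G x) (nhds (0::complex))"
    unfolding eventually_nhds using assms by (intro exI[of _ "ball 0 1"]) auto
  then have "(deriv ^^ n) F 0 = (deriv ^^ n) G 0" for n by (rule higher_deriv_cong_ev) simp
  then show ?thesis unfolding taylor_coeffs_def by auto
qed

lemma comp_op_taylor:
  assumes H: "H holomorphic_on ball 0 1" and self: "\<phi> ` ball 0 1 \<subseteq> ball 0 1"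
  shows "comp_op \<phi> (taylor_coeffs H) = taylor_coeffs (\<lambda>z. H (\<phi> z))"
  unfolding comp_op_def
proof (rule taylor_cong)
  fix w :: complex assume "w \<in> ball 0 1"
  then have "\<phi> w \<in> ball 0 1" using self by blast
  then show "power_series_fun (taylor_coeffs H) (\<phi> w) = H (\<phi> w)" by (rule psf_taylor[OF H])
qed

lemma comp_op_ek: "comp_op \<phi> (ek k) = taylor_coeffs (\<lambda>z. (\<phi> z) ^ k)"
  unfolding comp_op_def psf_ek ..

lemma iter_hol:
  fixes \<phi> :: "complex \<Rightarrow> complex"
  assumes hol: "\<phi> holomorphic_on ball 0 1" and self: "\<phi> ` ball 0 1 \<subseteq> ball 0 1"
  shows "(\<phi> ^^ n) holomorphic_on ball 0 1"
proof (induction n)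
  case 0 then show ?case by (simp add: holomorphic_on_id id_def)
next
  case (Suc n)
  have im: "(\<phi> ^^ n) ` ball 0 1 \<subseteq> ball 0 1"
  proof
    fix y assume "y \<in> (\<phi> ^^ n) ` ball 0 1"
    then obtain z where z: "z \<in> ball 0 1" and y: "y = (\<phi> ^^ n) z" by auto
    have "(\<phi> ^^ m) z \<in> ball 0 1" for m
    proof (induction m)
      case 0 then show ?case using z by simp
    next
      case (Suc m) then show ?case using self by (auto simp: image_subset_iff)
    qed
    then show "y \<in> ball 0 1" using y by simp
  qed
  have "(\<phi> \<circ> (\<phi> ^^ n)) holomorphic_on ball 0 1"
    by (rule holomorphic_on_compose_gen[OF Suc.IH hol im])
  then show ?case by (simp add: o_def)
qed

lemma funpow_Suc_apply: "(f ^^ Suc n) z = (f ^^ n) (f z)"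
  by (simp add: funpow_Suc_right del: funpow.simps)

lemma orbit_invariance:
  fixes \<phi> :: "complex \<Rightarrow> complex"
  assumes hol: "\<phi> holomorphic_on ball 0 1" and self: "\<phi> ` ball 0 1 \<subseteq> ball 0 1"
    and inA: "\<And>a. a \<in> A2 \<beta> \<Longrightarrow> comp_op \<phi> a \<in> A2 \<beta>"
    and inv: "\<And>a. a \<in> A2 \<beta> \<Longrightarrow> A2_inner \<beta> (comp_op \<phi> a) g = A2_inner \<beta> a g"
  shows "taylor_coeffs (\<lambda>z. ((\<phi> ^^ Suc m) z) ^ k) \<in> A2 \<beta> \<and>
         A2_inner \<beta> (taylor_coeffs (\<lambda>z. ((\<phi> ^^ Suc m) z) ^ k)) g = A2_inner \<beta> (ek k) g"
proof (induction m)
  case 0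
  have "taylor_coeffs (\<lambda>z. ((\<phi> ^^ Suc 0) z) ^ k) = comp_op \<phi> (ek k)"
    by (simp add: comp_op_ek)
  then show ?case using inA[OF ek_A2] inv[OF ek_A2] by simp
next
  case (Suc m)
  define H where "H = (\<lambda>z. ((\<phi> ^^ Suc m) z) ^ k)"
  have Hh: "H holomorphic_on ball 0 1" unfolding H_def
    by (intro holomorphic_on_power iter_hol[OF hol self])
  have "taylor_coeffs (\<lambda>z. ((\<phi> ^^ Suc (Suc m)) z) ^ k) = taylor_coeffs (\<lambda>z. H (\<phi> z))"
    unfolding H_def by (simp only: funpow_Suc_apply[where f=\<phi> and n="Suc m"])
  also have "\<dots> = comp_op \<phi> (taylor_coeffs H)" using comp_op_taylor[OF Hh self] by simp
  finally have e: "taylor_coeffs (\<lambda>z. ((\<phi> ^^ Suc (Suc m)) z) ^ k) = comp_op \<phi> (taylor_coeffs H)" .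
  have "taylor_coeffs H \<in> A2 \<beta>" using Suc H_def by simp
  then show ?case using e inA inv Suc H_def by simp
qed

definition Ec :: "real \<Rightarrow> complex" where
  "Ec s = exp (2 * of_real pi * \<i> * of_real s)"

lemma Ec_norm [simp]: "norm (Ec s) = 1"
  unfolding Ec_def by (simp add: norm_exp_eq_Re)

lemma Ec_nz [simp]: "Ec s \<noteq> 0"
  unfolding Ec_def by simp

lemma Ec_cnj: "cnj (Ec s) = inverse (Ec s)"
proof -
  have "cnj (Ec s) = exp (- (2 * of_real pi * \<i> * of_real s))"
    unfolding Ec_def by (simp add: exp_cnj)
  also have "\<dots> = inverse (Ec s)" unfolding Ec_def by (simp add: exp_minus)
  finally show ?thesis .
qed

lemma Ec_cont: "continuous_on A Ec"
  unfolding Ec_def by (intro continuous_intros)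

lemma coeff_integral:
  assumes H: "H holomorphic_on ball 0 1" and r: "0 < r" "r < 1"
  shows "((\<lambda>s. H (of_real r * Ec s) * cnj (Ec s) ^ n) has_integral (taylor_coeffs H n * of_real r ^ n)) {0..1}"
proof -
  have sub: "cball 0 r \<subseteq> ball (0::complex) 1" using r by auto
  have contf: "continuous_on (cball 0 r) H"
    using holomorphic_on_imp_continuous_on[OF H] continuous_on_subset sub by blast
  have holf: "H holomorphic_on ball 0 r" using H holomorphic_on_subset sub ball_subset_cball by blast
  have "((\<lambda>u. H u / (u - 0) ^ Suc n) has_contour_integral ((2 * pi * \<i>) / fact n * (deriv ^^ n) H 0))
         (circlepath 0 r)"
    by (rule Cauchy_has_contour_integral_higher_derivative_circlepath[OF contf holf]) (use r in simp)
  then have I: "((\<lambda>x. H (circlepath 0 r x) / (circlepath 0 r x - 0) ^ Suc n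
                  * vector_derivative (circlepath 0 r) (at x within {0..1}))
         has_integral ((2 * pi * \<i>) / fact n * (deriv ^^ n) H 0)) {0..1}"
    unfolding has_contour_integral_def .
  have eq: "H (circlepath 0 r x) / (circlepath 0 r x - 0) ^ Suc n
                  * vector_derivative (circlepath 0 r) (at x within {0..1})
          = (2 * pi * \<i> / of_real r ^ n) * (H (of_real r * Ec x) * cnj (Ec x) ^ n)"
    if x: "x \<in> {0..1}" for x
  proof -
    have cp: "circlepath 0 r x = of_real r * Ec x" unfolding circlepath Ec_def by simp
    have vd: "vector_derivative (circlepath 0 r) (at x within {0..1}) = 2 * pi * \<i> * r * Ec x"
      using vector_derivative_circlepath01[of x 0 r] x unfolding Ec_def by simp
    have rnz: "complex_of_real r \<noteq> 0" using r by simp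
    show ?thesis unfolding cp vd Ec_cnj using rnz
      by (simp add: field_simps power_inverse)
  qed
  have "((\<lambda>x. (2 * pi * \<i> / of_real r ^ n) * (H (of_real r * Ec x) * cnj (Ec x) ^ n))
         has_integral ((2 * pi * \<i>) / fact n * (deriv ^^ n) H 0)) {0..1}"
    by (rule has_integral_eq[OF _ I]) (rule eq)
  then have "((\<lambda>x. (of_real r ^ n / (2 * pi * \<i>)) * ((2 * pi * \<i> / of_real r ^ n) * (H (of_real r * Ec x) * cnj (Ec x) ^ n)))
         has_integral ((of_real r ^ n / (2 * pi * \<i>)) * ((2 * pi * \<i>) / fact n * (deriv ^^ n) H 0))) {0..1}"
    by (rule has_integral_mult_right)
  moreover have "(of_real r ^ n / (2 * pi * \<i>)) * ((2 * pi * \<i> / of_real r ^ n) * y) = y" for y :: complex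
    using r by (simp add: field_simps)
  moreover have "(of_real r ^ n / (2 * pi * \<i>)) * ((2 * pi * \<i>) / fact n * (deriv ^^ n) H 0)
      = taylor_coeffs H n * of_real r ^ n"
    unfolding taylor_coeffs_def by (simp add: field_simps)
  ultimately show ?thesis by simp
qed

lemma orth_integral:
  "((\<lambda>s. Ec s ^ n * cnj (Ec s) ^ m) has_integral (if n = m then 1 else 0)) {0..1}"
proof (cases "n = m")
  case True
  have "Ec s ^ n * cnj (Ec s) ^ m = 1" for s
    using True by (simp add: Ec_cnj power_inverse)
  then show ?thesis using True has_integral_const_real[of "1::complex" 0 1] by simp
next
  case False
  define k :: complex where "k = of_int (int n - int m)"
  define c where "c = 2 * of_real pi * \<i> * k"
  have kz: "k \<noteq> 0" unfolding k_def using False by simp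
  have cz: "c \<noteq> 0" unfolding c_def using kz by simp
  have int_eq: "Ec s ^ n * cnj (Ec s) ^ m = exp (c * of_real s)" for s
  proof -
    have "Ec s ^ n = exp (of_nat n * (2 * of_real pi * \<i> * of_real s))"
      unfolding Ec_def by (simp only: exp_of_nat_mult)
    moreover have "cnj (Ec s) ^ m = exp (of_nat m * (- (2 * of_real pi * \<i> * of_real s)))"
      unfolding Ec_def by (simp only: exp_of_nat_mult exp_cnj) simp
    ultimately have "Ec s ^ n * cnj (Ec s) ^ m
        = exp (of_nat n * (2 * of_real pi * \<i> * of_real s) + of_nat m * (- (2 * of_real pi * \<i> * of_real s)))"
      by (simp only: exp_add)
    also have "\<dots> = exp (c * of_real s)" unfolding c_def k_def by (simp add: algebra_simps)
    finally show ?thesis .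
  qed
  define F where "F s = exp (c * of_real s) / c" for s :: real
  have der: "(F has_vector_derivative exp (c * of_real x)) (at x within {0..1})" for x
  proof -
    have "((\<lambda>z. exp (c * z) / c) has_field_derivative exp (c * of_real x)) (at (of_real x))"
      using cz by (auto intro!: derivative_eq_intros)
    then show ?thesis unfolding F_def by (rule has_vector_derivative_real_field)
  qed
  have "((\<lambda>s. exp (c * of_real s)) has_integral (F 1 - F 0)) {0..1}"
    by (rule fundamental_theorem_of_calculus) (use der in auto)
  moreover have "exp c = 1"
  proof -
    have "int n - int m \<in> \<int>" by simp
    then have "exp ((2 * of_real (of_int (int n - int m)) * pi) * \<i>) = 1"
      using exp_integer_2pi[of "of_int (int n - int m)"] by simp
    then show ?thesis unfolding c_def k_def by (simp add: algebra_simps)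
  qed
  ultimately have "((\<lambda>s. exp (c * of_real s)) has_integral 0) {0..1}" unfolding F_def by simp
  then show ?thesis using False int_eq by simp
qed

lemma parseval_partial:
  assumes H: "H holomorphic_on ball 0 1" and bd: "\<And>z. z \<in> ball 0 1 \<Longrightarrow> norm (H z) \<le> 1"
    and r: "0 < r" "r < 1"
  shows "(\<Sum>n<N. (norm (taylor_coeffs H n))^2 * r^(2*n)) \<le> 1"
proof -
  define b where "b n = taylor_coeffs H n * of_real r ^ n" for n
  define S where "S = (\<Sum>n<N. (norm (b n))^2)"
  have Seq: "(\<Sum>n<N. (norm (taylor_coeffs H n))^2 * r^(2*n)) = S"
    unfolding S_def b_def using r
    by (intro sum.cong) (auto simp: norm_mult norm_power power_mult_distrib power_mult[symmetric] mult.commute)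
  define h where "h s = H (of_real r * Ec s)" for s
  define P where "P s = (\<Sum>n<N. b n * Ec s ^ n)" for s
  have bb: "cnj (b n) * (taylor_coeffs H n * of_real r ^ n) = of_real ((norm (b n))^2)" for n
  proof -
    have "complex_of_real ((norm (b n))^2) = b n * cnj (b n)" by (rule complex_norm_square)
    then show ?thesis by (simp only: b_def[symmetric] mult.commute)
  qed
  have A: "((\<lambda>s. h s * cnj (P s)) has_integral of_real S) {0..1}"
  proof -
    have e: "h s * cnj (P s) = (\<Sum>n<N. cnj (b n) * (H (of_real r * Ec s) * cnj (Ec s) ^ n))" for s
      unfolding P_def h_def by (simp add: sum_distrib_left algebra_simps)
    have "((\<lambda>s. \<Sum>n<N. cnj (b n) * (H (of_real r * Ec s) * cnj (Ec s) ^ n)) has_integral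
          (\<Sum>n<N. cnj (b n) * (taylor_coeffs H n * of_real r ^ n))) {0..1}"
      by (intro has_integral_sum has_integral_mult_right coeff_integral[OF H r]) auto
    also have "(\<Sum>n<N. cnj (b n) * (taylor_coeffs H n * of_real r ^ n)) = of_real S"
      unfolding S_def bb by simp
    finally show ?thesis using e by simp
  qed
  have B: "((\<lambda>s. P s * cnj (P s)) has_integral of_real S) {0..1}"
  proof -
    have e: "P s * cnj (P s) = (\<Sum>n<N. \<Sum>m<N. (b n * cnj (b m)) * (Ec s ^ n * cnj (Ec s) ^ m))" for s
      unfolding P_def by (simp add: sum_product algebra_simps)
    have "((\<lambda>s. \<Sum>n<N. \<Sum>m<N. (b n * cnj (b m)) * (Ec s ^ n * cnj (Ec s) ^ m)) has_integral
          (\<Sum>n<N. \<Sum>m<N. (b n * cnj (b m)) * (if n = m then 1 else 0))) {0..1}"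
      by (intro has_integral_sum has_integral_mult_right orth_integral) auto
    also have "(\<Sum>n<N. \<Sum>m<N. (b n * cnj (b m)) * (if n = m then 1 else 0)) = (\<Sum>n<N. b n * cnj (b n))"
      by (simp add: if_distrib cong: if_cong)
    also have "\<dots> = of_real S" unfolding S_def of_real_sum
      by (intro sum.cong refl) (simp only: complex_norm_square)
    finally show ?thesis using e by simp
  qed
  have D: "((\<lambda>s. P s * cnj (h s)) has_integral of_real S) {0..1}"
  proof -
    have "((cnj \<circ> (\<lambda>s. h s * cnj (P s))) has_integral cnj (of_real S)) {0..1}"
      using A has_integral_cnj by blast
    then show ?thesis by (simp add: o_def mult.commute)
  qed
  have hcont: "continuous_on {0..1} h"
  proof -
    have "continuous_on (ball 0 1) H" using H holomorphic_on_imp_continuous_on by blast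
    moreover have "continuous_on {0..1} (\<lambda>s. of_real r * Ec s)" by (intro continuous_intros Ec_cont)
    moreover have "(\<lambda>s. of_real r * Ec s) ` {0..1} \<subseteq> ball 0 1" using r by (auto simp: norm_mult)
    ultimately show ?thesis unfolding h_def by (rule continuous_on_compose2)
  qed
  have Pcont: "continuous_on {0..1} P" unfolding P_def by (intro continuous_intros Ec_cont)
  define g1 where "g1 s = (norm (h s))^2" for s
  have g1i: "g1 integrable_on {0..1}" unfolding g1_def
    by (intro integrable_continuous_interval continuous_intros hcont)
  define Ih where "Ih = integral {0..1} g1"
  have g1h: "(g1 has_integral Ih) {0..1}" using g1i Ih_def by (simp add: has_integral_integral)
  have Ih1: "Ih \<le> 1"
  proof -
    have "((\<lambda>s::real. 1::real) has_integral 1) {0..1}" using has_integral_const_real[of "1::real" 0 1] by simp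
    moreover have "g1 s \<le> 1" if "s \<in> {0..1}" for s
    proof -
      have "norm (h s) \<le> 1" unfolding h_def using r by (intro bd) (simp add: norm_mult)
      then show ?thesis unfolding g1_def by (simp add: power_le_one)
    qed
    ultimately show ?thesis using has_integral_le[OF g1h] by blast
  qed
  have C: "((\<lambda>s. h s * cnj (h s)) has_integral of_real Ih) {0..1}"
  proof -
    have "((\<lambda>s. complex_of_real (g1 s)) has_integral of_real Ih) {0..1}" by (rule has_integral_of_real[OF g1h])
    then show ?thesis unfolding g1_def complex_norm_square .
  qed
  define Dr where "Dr s = (norm (h s - P s))^2" for s
  have Dri: "Dr integrable_on {0..1}" unfolding Dr_def
    by (intro integrable_continuous_interval continuous_intros hcont Pcont)
  define J where "J = integral {0..1} Dr"
  have Drh: "(Dr has_integral J) {0..1}" using Dri J_def by (simp add: has_integral_integral)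
  have J0: "J \<ge> 0" using has_integral_nonneg[OF Drh] Dr_def by simp
  have "((\<lambda>s. complex_of_real (Dr s)) has_integral of_real J) {0..1}" by (rule has_integral_of_real[OF Drh])
  moreover have "((\<lambda>s. complex_of_real (Dr s)) has_integral (of_real Ih - of_real S - of_real S + of_real S)) {0..1}"
  proof -
    have e: "complex_of_real (Dr s) = h s * cnj (h s) - h s * cnj (P s) - P s * cnj (h s) + P s * cnj (P s)" for s
      unfolding Dr_def complex_norm_square by (simp add: algebra_simps)
    show ?thesis unfolding e by (intro has_integral_add has_integral_diff C A D B)
  qed
  ultimately have "complex_of_real J = of_real Ih - of_real S - of_real S + of_real S"
    using has_integral_unique by blast
  then have "J = Ih - S" by (metis add_diff_cancel diff_add_cancel of_real_diff of_real_eq_iff)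
  then show ?thesis using J0 Ih1 Seq by simp
qed

lemma parseval:
  assumes H: "H holomorphic_on ball 0 1" and bd: "\<And>z. z \<in> ball 0 1 \<Longrightarrow> norm (H z) \<le> 1"
  shows "summable (\<lambda>n. (norm (taylor_coeffs H n))^2)" and "(\<Sum>n. (norm (taylor_coeffs H n))^2) \<le> 1"
proof -
  have part: "(\<Sum>n<N. (norm (taylor_coeffs H n))^2) \<le> 1" for N
  proof -
    define rj where "rj j = 1 - 1 / (real j + 2)" for j
    have rj: "0 < rj j" "rj j < 1" for j unfolding rj_def by (auto simp: field_simps)
    have "(\<lambda>j. inverse (real (Suc (Suc j)))) \<longlonglongrightarrow> 0"
      by (rule LIMSEQ_Suc[OF LIMSEQ_inverse_real_of_nat])
    moreover have "inverse (real (Suc (Suc j))) = 1 / (real j + 2)" for j by (simp add: divide_inverse add.commute)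
    ultimately have "(\<lambda>j. 1 / (real j + 2)) \<longlonglongrightarrow> 0" by simp
    then have "rj \<longlonglongrightarrow> 1 - 0" unfolding rj_def by (intro tendsto_intros)
    then have rl: "rj \<longlonglongrightarrow> 1" by simp
    have "(\<lambda>j. \<Sum>n<N. (norm (taylor_coeffs H n))^2 * rj j^(2*n)) \<longlonglongrightarrow> (\<Sum>n<N. (norm (taylor_coeffs H n))^2 * 1^(2*n))"
      by (intro tendsto_intros rl)
    moreover have "\<forall>j. (\<Sum>n<N. (norm (taylor_coeffs H n))^2 * rj j^(2*n)) \<le> 1"
      using parseval_partial[OF H bd rj] by blast
    ultimately have "(\<Sum>n<N. (norm (taylor_coeffs H n))^2 * 1^(2*n)) \<le> 1"
      by (intro LIMSEQ_le_const2) auto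
    then show ?thesis by simp
  qed
  show s: "summable (\<lambda>n. (norm (taylor_coeffs H n))^2)"
    by (rule summableI_nonneg_bounded[where x=1]) (use part in auto)
  show "(\<Sum>n. (norm (taylor_coeffs H n))^2) \<le> 1"
    by (rule suminf_le_const[OF s part])
qed

lemma taylor_A2:
  assumes b: "\<beta> > -1" and H: "H holomorphic_on ball 0 1" and bd: "\<And>z. z \<in> ball 0 1 \<Longrightarrow> norm (H z) \<le> 1"
  shows "taylor_coeffs H \<in> A2 \<beta>" and "A2_norm_sq \<beta> (taylor_coeffs H) \<le> 1"
proof -
  note p = parseval[OF H bd]
  have le: "bergman_weight \<beta> n * (norm (taylor_coeffs H n))^2 \<le> (norm (taylor_coeffs H n))^2" for n
    using weight_le1[OF b, of n] by (simp add: mult_left_le_one_le weight_pos[OF b] less_imp_le)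
  have nn: "0 \<le> bergman_weight \<beta> n * (norm (taylor_coeffs H n))^2" for n
    using weight_pos[OF b, of n] by simp
  have s: "summable (\<lambda>n. bergman_weight \<beta> n * (norm (taylor_coeffs H n))^2)"
    by (rule summable_comparison_test'[OF p(1), of 0]) (use le nn in auto)
  then show "taylor_coeffs H \<in> A2 \<beta>" unfolding A2_def by simp
  have "A2_norm_sq \<beta> (taylor_coeffs H) \<le> (\<Sum>n. (norm (taylor_coeffs H n))^2)"
    unfolding A2_norm_sq_def by (rule suminf_le[OF le s p(1)])
  then show "A2_norm_sq \<beta> (taylor_coeffs H) \<le> 1" using p(2) by simp
qed

lemma iter_schwarz_pick:
  fixes \<phi> :: "complex \<Rightarrow> complex"
  assumes hol: "\<phi> holomorphic_on ball 0 1" and self: "\<phi> ` ball 0 1 \<subseteq> ball 0 1"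
    and a: "a \<in> ball 0 1" and z: "z \<in> ball 0 1"
  shows "norm (Mb ((\<phi> ^^ n) a) ((\<phi> ^^ n) z)) \<le> norm (Mb a z)"
proof (induction n)
  case 0 then show ?case by simp
next
  case (Suc n)
  have "norm (Mb (\<phi> ((\<phi> ^^ n) a)) (\<phi> ((\<phi> ^^ n) z))) \<le> norm (Mb ((\<phi> ^^ n) a) ((\<phi> ^^ n) z))"
    by (rule schwarz_pick[OF hol self iter_in_ball[OF self a] iter_in_ball[OF self z]])
  then show ?case using Suc by simp
qed

lemma iter_near_orbit:
  fixes \<phi> :: "complex \<Rightarrow> complex"
  assumes hol: "\<phi> holomorphic_on ball 0 1" and self: "\<phi> ` ball 0 1 \<subseteq> ball 0 1"
    and z: "norm z \<le> 1/2"
  shows "norm ((\<phi> ^^ n) z - (\<phi> ^^ n) 0) \<le> 2 * (1 - norm ((\<phi> ^^ n) 0))"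
proof -
  have zb: "z \<in> ball 0 1" using z by simp
  have zb0: "(0::complex) \<in> ball 0 1" by simp
  have "norm (Mb ((\<phi> ^^ n) 0) ((\<phi> ^^ n) z)) \<le> norm (Mb 0 z)"
    by (rule iter_schwarz_pick[OF hol self zb0 zb])
  also have "Mb 0 z = z" by (simp add: Mb_simple)
  finally have "norm (Mb ((\<phi> ^^ n) 0) ((\<phi> ^^ n) z)) \<le> 1/2" using z by simp
  then show ?thesis
    using Mb_half_bound iter_in_ball[OF self zb0, of n] iter_in_ball[OF self zb, of n] by simp
qed

lemma coeff_bound:
  fixes H :: "complex \<Rightarrow> complex"
  assumes H: "H holomorphic_on ball 0 1" and n: "n \<ge> 1"
    and e: "\<And>z. norm z \<le> 1/2 \<Longrightarrow> norm (H z - L) \<le> \<epsilon>"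
  shows "norm (taylor_coeffs H n) \<le> \<epsilon> * 2 ^ n"
proof -
  have sub: "cball 0 (1/2) \<subseteq> ball (0::complex) 1" by auto
  have Hd: "(\<lambda>w. H w - L) holomorphic_on ball 0 1" using H by (intro holomorphic_intros)
  have hol2: "(\<lambda>w. H w - L) holomorphic_on ball 0 (1/2)"
    using Hd holomorphic_on_subset sub ball_subset_cball by blast
  have cont2: "continuous_on (cball 0 (1/2)) (\<lambda>w. H w - L)"
    using holomorphic_on_imp_continuous_on[OF Hd] continuous_on_subset sub by blast
  have "norm ((deriv ^^ n) (\<lambda>w. H w - L) 0) \<le> fact n * \<epsilon> / (1/2) ^ n"
    by (rule Cauchy_inequality[OF hol2 cont2]) (use e in auto)
  moreover have "(deriv ^^ n) (\<lambda>w. H w - L) 0 = (deriv ^^ n) H 0"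
  proof -
    have "(deriv ^^ n) (\<lambda>w. H w - L) 0 = (deriv ^^ n) H 0 - (deriv ^^ n) (\<lambda>w. L) 0"
      by (rule higher_deriv_diff[OF H]) auto
    then show ?thesis using n by (simp add: higher_deriv_const)
  qed
  moreover have "fact n * \<epsilon> / (1/2::real) ^ n = fact n * \<epsilon> * 2 ^ n"
  proof -
    have "(1/2::real) ^ n = 1 / 2 ^ n" by (rule power_one_over)
    then show ?thesis by simp
  qed
  ultimately have "norm ((deriv ^^ n) H 0) \<le> fact n * \<epsilon> * 2 ^ n" by simp
  then have "norm ((deriv ^^ n) H 0) / fact n \<le> fact n * \<epsilon> * 2 ^ n / fact n"
    by (intro divide_right_mono) auto
  then show ?thesis unfolding taylor_coeffs_def by (simp add: norm_divide)
qed

lemma amgm_w: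
  fixes w a b t :: real
  assumes "w \<ge> 0" "t > 0" "a \<ge> 0" "b \<ge> 0"
  shows "w * a * b \<le> t / 2 * (w * a^2) + 1 / (2 * t) * (w * b^2)"
proof -
  have "0 \<le> (t * a - b)^2" by simp
  then have "2 * t * (a * b) \<le> t^2 * a^2 + b^2" by (simp add: power2_eq_square algebra_simps)
  then have "a * b \<le> (t^2 * a^2 + b^2) / (2 * t)" using assms by (simp add: field_simps)
  then have "w * (a * b) \<le> w * ((t^2 * a^2 + b^2) / (2 * t))" using assms by (intro mult_left_mono) auto
  also have "\<dots> = t / 2 * (w * a^2) + 1 / (2 * t) * (w * b^2)" using assms
    by (simp add: field_simps power2_eq_square)
  finally show ?thesis by (simp add: mult.assoc)
qed

lemma tail_tendsto:
  fixes G :: "nat \<Rightarrow> real"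
  assumes "summable G"
  shows "(\<lambda>N. \<Sum>n. G (n + N)) \<longlonglongrightarrow> 0"
proof -
  have "(\<lambda>N. \<Sum>n. G (n + N)) = (\<lambda>N. suminf G - (\<Sum>i<N. G i))"
    using suminf_split_initial_segment[OF assms] by (auto simp: fun_eq_iff algebra_simps)
  moreover have "(\<lambda>N. suminf G - (\<Sum>i<N. G i)) \<longlonglongrightarrow> suminf G - suminf G"
    by (intro tendsto_diff tendsto_const summable_LIMSEQ[OF assms])
  ultimately show ?thesis by simp
qed

lemma weak_limit:
  fixes A :: "nat \<Rightarrow> nat \<Rightarrow> complex" and g :: "nat \<Rightarrow> complex"
  assumes b: "\<beta> > -1"
    and AA: "\<And>j. A j \<in> A2 \<beta>" and An: "\<And>j. A2_norm_sq \<beta> (A j) \<le> 1"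
    and g: "g \<in> A2 \<beta>"
    and c0: "(\<lambda>j. A j 0) \<longlonglongrightarrow> L"
    and cn: "\<And>n. n \<ge> 1 \<Longrightarrow> (\<lambda>j. A j n) \<longlonglongrightarrow> 0"
    and inner: "\<And>j. A2_inner \<beta> (A j) g = \<gamma>"
  shows "\<gamma> = L * cnj (g 0)"
proof -
  define w where "w n = bergman_weight \<beta> n" for n
  have w0: "w n \<ge> 0" for n unfolding w_def using weight_pos[OF b] less_imp_le by blast
  have w00: "w 0 = 1" unfolding w_def using weight_0[OF b] .
  define G where "G n = w n * (norm (g n))^2" for n
  have Gs: "summable G" using g unfolding A2_def G_def w_def by simp
  define F where "F j n = w n * (norm (A j n))^2" for j n
  have Fs: "summable (F j)" for j using AA[of j] unfolding A2_def F_def w_def by simp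
  have Fn: "suminf (F j) \<le> 1" for j using An[of j] unfolding A2_norm_sq_def F_def w_def by simp
  have Fnn: "F j n \<ge> 0" for j n unfolding F_def using w0 by simp
  have Gnn: "G n \<ge> 0" for n unfolding G_def using w0 by simp
  define u where "u j n = complex_of_real (w n) * A j n * cnj (g n)" for j n
  have nu: "norm (u j n) = w n * norm (A j n) * norm (g n)" for j n
    unfolding u_def using w0 by (simp add: norm_mult)
  have ub: "norm (u j n) \<le> t / 2 * F j n + 1 / (2 * t) * G n" if "t > 0" for t j n
    unfolding nu F_def G_def by (rule amgm_w) (use w0 that in auto)
  have us: "summable (\<lambda>n. norm (u j n))" for j
  proof (rule summable_comparison_test'[where N=0])
    show "summable (\<lambda>n. 1 / 2 * F j n + 1 / (2 * 1) * G n)"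
      by (intro summable_add summable_mult Fs Gs)
    show "norm (norm (u j n)) \<le> 1 / 2 * F j n + 1 / (2 * 1) * G n" for n using ub[of 1 j n] by simp
  qed
  have ginner: "\<gamma> = suminf (u j)" for j using inner[of j] unfolding A2_inner_def u_def w_def by simp
  have "norm (\<gamma> - L * cnj (g 0)) \<le> \<epsilon>" if e: "\<epsilon> > 0" for \<epsilon>
  proof -
    have "(\<lambda>N. \<Sum>n. G (n + N)) \<longlonglongrightarrow> 0" by (rule tail_tendsto[OF Gs])
    then have "eventually (\<lambda>N. (\<Sum>n. G (n + N)) < \<epsilon>^2) sequentially"
      using e by (intro order_tendstoD(2)) auto
    then obtain N0 where N0: "\<And>N. N \<ge> N0 \<Longrightarrow> (\<Sum>n. G (n + N)) < \<epsilon>^2"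
      unfolding eventually_sequentially by blast
    define N where "N = Suc N0"
    have TN: "(\<Sum>n. G (n + N)) < \<epsilon>^2" using N0[of N] N_def by linarith
    have tail: "norm (\<gamma> - (\<Sum>i<N. u j i)) \<le> \<epsilon>" for j
    proof -
      have su: "summable (u j)" using us[of j] by (rule summable_norm_cancel)
      have "\<gamma> - (\<Sum>i<N. u j i) = (\<Sum>n. u j (n + N))"
        using suminf_split_initial_segment[OF su, of N] ginner[of j] by simp
      moreover have sun: "summable (\<lambda>n. norm (u j (n + N)))"
        using summable_ignore_initial_segment[OF us[of j], of N] by simp
      ultimately have "norm (\<gamma> - (\<Sum>i<N. u j i)) \<le> (\<Sum>n. norm (u j (n + N)))"
        using summable_norm by metis
      also have "\<dots> \<le> (\<Sum>n. \<epsilon> / 2 * F j (n + N) + 1 / (2 * \<epsilon>) * G (n + N))"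
      proof (rule suminf_le)
        show "summable (\<lambda>n. \<epsilon> / 2 * F j (n + N) + 1 / (2 * \<epsilon>) * G (n + N))"
          by (intro summable_add summable_mult summable_ignore_initial_segment Fs Gs)
      qed (use ub e sun in auto)
      also have "\<dots> = \<epsilon> / 2 * (\<Sum>n. F j (n + N)) + 1 / (2 * \<epsilon>) * (\<Sum>n. G (n + N))"
      proof -
        have s1: "summable (\<lambda>n. F j (n + N))" by (intro summable_ignore_initial_segment Fs)
        have s2: "summable (\<lambda>n. G (n + N))" by (intro summable_ignore_initial_segment Gs)
        have "(\<Sum>n. \<epsilon> / 2 * F j (n + N) + 1 / (2 * \<epsilon>) * G (n + N))
            = (\<Sum>n. \<epsilon> / 2 * F j (n + N)) + (\<Sum>n. 1 / (2 * \<epsilon>) * G (n + N))"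
          by (rule suminf_add[symmetric]) (intro summable_mult s1 s2)+
        also have "\<dots> = \<epsilon> / 2 * (\<Sum>n. F j (n + N)) + 1 / (2 * \<epsilon>) * (\<Sum>n. G (n + N))"
          by (simp only: suminf_mult[OF s1] suminf_mult[OF s2])
        finally show ?thesis .
      qed
      also have "\<dots> \<le> \<epsilon> / 2 * 1 + 1 / (2 * \<epsilon>) * \<epsilon>^2"
      proof (rule add_mono)
        have "(\<Sum>n. F j (n + N)) \<le> suminf (F j)"
        proof -
          have "suminf (F j) = (\<Sum>n. F j (n + N)) + (\<Sum>i<N. F j i)"
            by (rule suminf_split_initial_segment[OF Fs])
          moreover have "(\<Sum>i<N. F j i) \<ge> 0" using Fnn by (simp add: sum_nonneg)
          ultimately show ?thesis by simp
        qed
        then show "\<epsilon> / 2 * (\<Sum>n. F j (n + N)) \<le> \<epsilon> / 2 * 1" using Fn[of j] e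
          by (intro mult_left_mono) auto
        show "1 / (2 * \<epsilon>) * (\<Sum>n. G (n + N)) \<le> 1 / (2 * \<epsilon>) * \<epsilon>^2" using TN e
          by (intro mult_left_mono) auto
      qed
      also have "\<dots> = \<epsilon>" using e by (simp add: field_simps power2_eq_square)
      finally show ?thesis .
    qed
    have lim: "(\<lambda>j. \<Sum>i<N. u j i) \<longlonglongrightarrow> (\<Sum>i<N. (if i = 0 then L * cnj (g 0) else 0))"
    proof (rule tendsto_sum)
      fix i assume "i \<in> {..<N}"
      show "(\<lambda>j. u j i) \<longlonglongrightarrow> (if i = 0 then L * cnj (g 0) else 0)"
      proof (cases "i = 0")
        case True
        then show ?thesis unfolding u_def using w00 by (auto intro!: tendsto_intros c0)
      next
        case False
        then have "(\<lambda>j. A j i) \<longlonglongrightarrow> 0" using cn by simp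
        then have "(\<lambda>j. complex_of_real (w i) * A j i * cnj (g i)) \<longlonglongrightarrow> complex_of_real (w i) * 0 * cnj (g i)"
          by (intro tendsto_intros)
        then show ?thesis unfolding u_def using False by simp
      qed
    qed
    have "(\<Sum>i<N. (if i = 0 then L * cnj (g 0) else 0)) = L * cnj (g 0)"
      using N_def by (simp add: sum.delta)
    then have lim2: "(\<lambda>j. norm (\<gamma> - (\<Sum>i<N. u j i))) \<longlonglongrightarrow> norm (\<gamma> - L * cnj (g 0))"
      using lim by (intro tendsto_norm tendsto_diff tendsto_const) simp
    show ?thesis by (rule LIMSEQ_le_const2[OF lim2]) (use tail in auto)
  qed
  then have "norm (\<gamma> - L * cnj (g 0)) = 0"
    by (metis dense_ge norm_ge_zero order.antisym)
  then show ?thesis by simp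
qed

lemma caseI_false:
  fixes \<phi> :: "complex \<Rightarrow> complex" and g :: "nat \<Rightarrow> complex"
  assumes b: "\<beta> > -1" and hol: "\<phi> holomorphic_on ball 0 1" and self: "\<phi> ` ball 0 1 \<subseteq> ball 0 1"
    and g: "g \<in> A2 \<beta>" and gnz: "g \<noteq> (\<lambda>n. 0)"
    and inA: "\<And>a. a \<in> A2 \<beta> \<Longrightarrow> comp_op \<phi> a \<in> A2 \<beta>"
    and inv: "\<And>a. a \<in> A2 \<beta> \<Longrightarrow> A2_inner \<beta> (comp_op \<phi> a) g = A2_inner \<beta> a g"
    and unb: "\<And>r. r < 1 \<Longrightarrow> \<exists>n. norm ((\<phi> ^^ n) 0) > r"
  shows False
proof -
  define c where "c n = (\<phi> ^^ n) 0" for n :: nat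
  have zb: "(0::complex) \<in> ball 0 1" by simp
  have cb: "norm (c n) < 1" for n using iter_in_ball[OF self zb, of n] c_def by simp
  have "\<forall>j::nat. \<exists>n. norm (c n) > 1 - 1 / (real j + 1)"
  proof
    fix j :: nat
    have "1 - 1 / (real j + 1) < 1" by simp
    then show "\<exists>n. norm (c n) > 1 - 1 / (real j + 1)" using unb c_def by presburger
  qed
  then obtain ns where ns: "\<And>j. norm (c (ns j)) > 1 - 1 / (real j + 1)" by metis
  have ns1: "ns j \<ge> 1" for j
  proof (rule ccontr)
    assume "\<not> ns j \<ge> 1"
    then have "ns j = 0" by simp
    then have "norm (c (ns j)) = 0" by (simp add: c_def)
    moreover have "1 - 1 / (real j + 1) \<ge> 0" by (simp add: field_simps)
    ultimately show False using ns[of j] by simp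
  qed
  have "seq_compact (cball (0::complex) 1)" by (rule compact_imp_seq_compact) simp
  moreover have "\<forall>j. c (ns j) \<in> cball 0 1" using cb by (simp add: less_imp_le)
  ultimately obtain \<omega> s where om: "\<omega> \<in> cball 0 1" and s: "strict_mono (s::nat\<Rightarrow>nat)"
    and cs: "((\<lambda>j. c (ns j)) \<circ> s) \<longlonglongrightarrow> \<omega>"
    using seq_compactE[of "cball 0 1" "\<lambda>j. c (ns j)"] by blast
  define m where "m j = ns (s j)" for j
  define C where "C j = c (m j)" for j
  have Cl: "C \<longlonglongrightarrow> \<omega>" using cs unfolding C_def m_def by (simp add: o_def)
  have nC: "(\<lambda>j. norm (C j)) \<longlonglongrightarrow> norm \<omega>" by (rule tendsto_norm[OF Cl])
  have om1: "norm \<omega> = 1"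
  proof (rule ccontr)
    assume "norm \<omega> \<noteq> 1"
    then have lt: "norm \<omega> < 1" using om by simp
    then obtain M :: nat where M: "1 / (real M + 1) < 1 - norm \<omega>"
      by (metis diff_gt_0_iff_gt nat_approx_posE of_nat_Suc add.commute)
    have "eventually (\<lambda>j. norm (C j) \<ge> 1 - 1 / (real M + 1)) sequentially"
    proof (rule eventually_sequentiallyI[of M])
      fix j assume j: "j \<ge> M"
      have "s j \<ge> j" using seq_suble[OF s] by simp
      then have "real (s j) + 1 \<ge> real M + 1" using j by simp
      then have "1 / (real (s j) + 1) \<le> 1 / (real M + 1)" by (intro divide_left_mono) auto
      then show "norm (C j) \<ge> 1 - 1 / (real M + 1)" using ns[of "s j"] unfolding C_def m_def by simp
    qed
    then have "norm \<omega> \<ge> 1 - 1 / (real M + 1)" using nC by (intro tendsto_lowerbound) auto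
    then show False using M by simp
  qed
  define eps where "eps j = 2 * (1 - norm (C j)) + norm (C j - \<omega>)" for j
  have eps0: "eps \<longlonglongrightarrow> 0"
  proof -
    have "(\<lambda>j. 2 * (1 - norm (C j)) + norm (C j - \<omega>)) \<longlonglongrightarrow> 2 * (1 - norm \<omega>) + norm (\<omega> - \<omega>)"
      by (intro tendsto_intros nC Cl)
    then show ?thesis unfolding eps_def using om1 by simp
  qed
  have unif: "norm ((\<phi> ^^ m j) z - \<omega>) \<le> eps j" if z: "norm z \<le> 1/2" for j z
  proof -
    have "norm ((\<phi> ^^ m j) z - \<omega>) \<le> norm ((\<phi> ^^ m j) z - C j) + norm (C j - \<omega>)"
      using norm_triangle_ineq[of "(\<phi> ^^ m j) z - C j" "C j - \<omega>"] by simp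
    also have "norm ((\<phi> ^^ m j) z - C j) \<le> 2 * (1 - norm (C j))"
      unfolding C_def c_def by (rule iter_near_orbit[OF hol self z])
    finally show ?thesis unfolding eps_def by simp
  qed
  have key: "complex_of_real (bergman_weight \<beta> k) * cnj (g k) = \<omega> ^ k * cnj (g 0)" for k
  proof -
    define H where "H j = (\<lambda>z. ((\<phi> ^^ m j) z) ^ k)" for j
    define A where "A j = taylor_coeffs (H j)" for j
    have Hh: "H j holomorphic_on ball 0 1" for j unfolding H_def
      by (intro holomorphic_on_power iter_hol[OF hol self])
    have inb: "norm ((\<phi> ^^ n) z) < 1" if "z \<in> ball 0 1" for n z
      using iter_in_ball[OF self that, of n] by simp
    have Hb: "norm (H j z) \<le> 1" if "z \<in> ball 0 1" for j z
      unfolding H_def using inb[OF that, of "m j"] by (simp add: norm_power power_le_one less_imp_le)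
    have AA: "A j \<in> A2 \<beta>" and An: "A2_norm_sq \<beta> (A j) \<le> 1" for j
      unfolding A_def using taylor_A2[OF b Hh Hb] by auto
    have inner: "A2_inner \<beta> (A j) g = A2_inner \<beta> (ek k) g" for j
    proof -
      have "m j = Suc (m j - 1)" using ns1 m_def by (metis Suc_pred' less_le_trans zero_less_one)
      then show ?thesis unfolding A_def H_def
        using orbit_invariance[OF hol self inA inv, of "m j - 1" k] by metis
    qed
    have A0: "A j 0 = C j ^ k" for j unfolding A_def H_def taylor_coeffs_def C_def c_def by simp
    have c0: "(\<lambda>j. A j 0) \<longlonglongrightarrow> \<omega> ^ k" unfolding A0 by (intro tendsto_intros Cl)
    have cn: "(\<lambda>j. A j n) \<longlonglongrightarrow> 0" if n: "n \<ge> 1" for n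
    proof -
      have bd: "norm (A j n) \<le> (real k * eps j) * 2 ^ n" for j
        unfolding A_def
      proof (rule coeff_bound[OF Hh n])
        fix z :: complex assume z: "norm z \<le> 1/2"
        then have zb': "z \<in> ball 0 1" by simp
        have "norm (H j z - \<omega> ^ k) \<le> real k * norm ((\<phi> ^^ m j) z - \<omega>)"
          unfolding H_def by (rule norm_power_diff) (use inb[OF zb'] om1 in \<open>auto simp: less_imp_le\<close>)
        also have "\<dots> \<le> real k * eps j" by (intro mult_left_mono unif z) auto
        finally show "norm (H j z - \<omega> ^ k) \<le> real k * eps j" .
      qed
      have "(\<lambda>j. (real k * eps j) * 2 ^ n) \<longlonglongrightarrow> (real k * 0) * 2 ^ n"
        by (intro tendsto_intros eps0)
      then have "(\<lambda>j. (real k * eps j) * 2 ^ n) \<longlonglongrightarrow> 0" by simp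
      then show ?thesis
        using Lim_null_comparison[of "\<lambda>j. A j n" "\<lambda>j. (real k * eps j) * 2 ^ n" sequentially] bd
        by (simp add: always_eventually)
    qed
    have "A2_inner \<beta> (ek k) g = \<omega> ^ k * cnj (g 0)"
      by (rule weak_limit[OF b AA An g c0 cn inner])
    then show ?thesis using inner_ek by metis
  qed
  have w: "bergman_weight \<beta> k > 0" "bergman_weight \<beta> k \<le> 1" for k
    using weight_pos[OF b] weight_le1[OF b] by auto
  have nk: "bergman_weight \<beta> k * norm (g k) = norm (g 0)" for k
  proof -
    have "norm (complex_of_real (bergman_weight \<beta> k) * cnj (g k)) = norm (\<omega> ^ k * cnj (g 0))"
      using key[of k] by simp
    then show ?thesis using om1 w(1)[of k] by (simp add: norm_mult norm_power)
  qed
  define T where "T k = bergman_weight \<beta> k * (norm (g k))^2" for k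
  have Ts: "summable T" using g unfolding A2_def T_def by simp
  have T0: "T \<longlonglongrightarrow> 0" by (rule summable_LIMSEQ_zero[OF Ts])
  have Tge: "(norm (g 0))^2 \<le> T k" for k
  proof -
    have "(norm (g 0))^2 = (bergman_weight \<beta> k * norm (g k))^2" using nk[of k] by simp
    also have "\<dots> = bergman_weight \<beta> k * T k"
      unfolding T_def by (simp only: power_mult_distrib power2_eq_square mult.assoc mult.left_commute)
    also have "\<dots> \<le> 1 * T k" using w[of k] T_def by (intro mult_right_mono) auto
    finally show ?thesis by simp
  qed
  have "(norm (g 0))^2 \<le> 0" by (rule LIMSEQ_le_const[OF T0]) (use Tge in auto)
  then have g0: "g 0 = 0" by simp
  have "g k = 0" for k using nk[of k] g0 w(1)[of k] by simp
  then show False using gnz by auto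
qed

theorem theorem3p1:
  fixes \<beta> :: real and \<phi> :: "complex \<Rightarrow> complex"
  assumes "\<beta> > -1"
    and "\<phi> holomorphic_on ball 0 1" and "\<phi> ` ball 0 1 \<subseteq> ball 0 1"
    and "A2_complex_symmetric \<beta> (comp_op \<phi>)"
  shows "elliptic_automorphism \<phi> \<or> (\<exists>\<omega>\<in>ball 0 1. denjoy_wolff_point \<phi> \<omega>)"
proof -
  note b = assms(1) and hol = assms(2) and self = assms(3)
  from assms(4) obtain C Tadj where bo: "A2_bounded_operator \<beta> (comp_op \<phi>)"
    and Cc: "A2_conjugation \<beta> C" and TA: "\<And>a. a \<in> A2 \<beta> \<Longrightarrow> Tadj a \<in> A2 \<beta>"
    and adj: "\<And>a b. a \<in> A2 \<beta> \<Longrightarrow> b \<in> A2 \<beta> \<Longrightarrow> A2_inner \<beta> (comp_op \<phi> a) b = A2_inner \<beta> a (Tadj b)"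
    and CT: "\<And>a. a \<in> A2 \<beta> \<Longrightarrow> C (comp_op \<phi> a) = Tadj (C a)"
    unfolding A2_complex_symmetric_def by blast
  have inA: "\<And>a. a \<in> A2 \<beta> \<Longrightarrow> comp_op \<phi> a \<in> A2 \<beta>" using bo unfolding A2_bounded_operator_def by blast
  have CA: "\<And>a. a \<in> A2 \<beta> \<Longrightarrow> C a \<in> A2 \<beta>" using Cc unfolding A2_conjugation_def by blast
  have Clin: "\<And>a b c. a \<in> A2 \<beta> \<Longrightarrow> b \<in> A2 \<beta> \<Longrightarrow> C (\<lambda>n. c * a n + b n) = (\<lambda>n. cnj c * C a n + C b n)"
    using Cc unfolding A2_conjugation_def by blast
  have CC: "\<And>a. a \<in> A2 \<beta> \<Longrightarrow> C (C a) = a" using Cc unfolding A2_conjugation_def by blast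
  have e0: "comp_op \<phi> (ek 0) = ek 0"
    unfolding comp_op_ek by (simp add: taylor_const ek_def)
  define g where "g = C (ek 0)"
  have gA: "g \<in> A2 \<beta>" unfolding g_def using CA ek_A2 by blast
  have Tg: "Tadj g = g" unfolding g_def using CT[OF ek_A2, of 0] e0 by simp
  have inv: "\<And>a. a \<in> A2 \<beta> \<Longrightarrow> A2_inner \<beta> (comp_op \<phi> a) g = A2_inner \<beta> a g"
    using adj gA Tg by simp
  have zA: "(\<lambda>n. 0::complex) \<in> A2 \<beta>" unfolding A2_def by simp
  have C0: "C (\<lambda>n. 0) = (\<lambda>n. 0)"
  proof -
    have "C (\<lambda>n. 1 * (0::complex) + 0) = (\<lambda>n. cnj 1 * C (\<lambda>n. 0) n + C (\<lambda>n. 0) n)"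
      using Clin[OF zA zA, of 1] by simp
    then have "C (\<lambda>n. 0) = (\<lambda>n. C (\<lambda>n. 0) n + C (\<lambda>n. 0) n)" by simp
    then show ?thesis by (metis add_cancel_left_left fun_eq_iff)
  qed
  have gnz: "g \<noteq> (\<lambda>n. 0)"
  proof
    assume "g = (\<lambda>n. 0)"
    then have "C g = (\<lambda>n. 0)" using C0 by simp
    moreover have "C g = ek 0" unfolding g_def using CC[OF ek_A2] .
    ultimately have "ek 0 0 = 0" by (metis)
    then show False by (simp add: ek_def)
  qed
  show ?thesis
  proof (cases "elliptic_automorphism \<phi>")
    case True then show ?thesis by simp
  next
    case nell: False
    have "\<exists>p\<in>ball 0 1. \<phi> p = p"
    proof (cases "\<exists>r<1. \<forall>n. norm ((\<phi> ^^ n) 0) \<le> r")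
      case True
      then obtain r where r: "r < 1" "\<And>n. norm ((\<phi> ^^ n) 0) \<le> r" by blast
      have "0 \<le> r" using r(2)[of 0] by simp
      then show ?thesis using bounded_orbit_fixed_point[OF hol self _ r(1) r(2)] by blast
    next
      case False
      then have unb: "\<And>r. r < 1 \<Longrightarrow> \<exists>n. norm ((\<phi> ^^ n) 0) > r" by (meson not_le)
      show ?thesis using caseI_false[OF b hol self gA gnz inA inv unb] by blast
    qed
    then obtain p where p: "p \<in> ball 0 1" "\<phi> p = p" by blast
    have naut: "\<not> disc_automorphism \<phi>"
      using nell p unfolding elliptic_automorphism_def by blast
    have "denjoy_wolff_point \<phi> p"
      unfolding denjoy_wolff_point_def
      using nell p iterates_to_fixed[OF hol self p(1) p(2) naut] by auto
    then show ?thesis using p by blast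
  qed
qed

end
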